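(* Let $(X_n)_{n\ge0}$ be the Kendall random walk with step distribution $\nu\in\mathcal P_s$, $\nu(\{0\})=0$, let $a>0$ with $\nu(\{a\})=0$ and $G(a)\ne\frac12$, and let $\tau_a^+=\min\{n\ge1:X_n>a\}$. Then for every $n\in\mathbb N$, $n\ge1$, $$\mathbb P(\tau_a^+=n)=A(a)\Big(\frac12\Big)^n+B(a)\,n\,(1-G(a))^2G(a)^{n-1}+C(a)\,G(a)^{n-1}(1-G(a)),$$ where $$A(a)=1+\frac{H(a)}{(2G(a)-1)^2}-\frac{G(a)}{2G(a)-1},\quad B(a)=\frac{H(a)}{(2G(a)-1)(1-G(a))},\quad C(a)=\frac{G(a)}{2G(a)-1}-\frac{H(a)}{(2G(a)-1)^2}\frac{G(a)}{1-G(a)},$$ and $A(a)+B(a)+C(a)=1$.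
   Context: Fix $\alpha>0$. $\mathcal P_s$ is the set of symmetric Borel probability measures on $\mathbb R$. For $x\in\mathbb R$, $\widetilde\delta_x=\frac12(\delta_x+\delta_{-x})$. For a probability measure $\lambda=\mathcal L(X)$ and $c>0$, $T_c\lambda=\mathcal L(cX)$, and $T_0\lambda=\delta_0$. $\widetilde\pi_{2\alpha}$ is the symmetric Pareto probability measure with density $\alpha|y|^{-2\alpha-1}\mathbf 1_{\{|y|\ge1\}}$. The Kendall convolution $\vartriangle_\alpha$ on $\mathcal P_s$ is defined by $\widetilde\delta_x\vartriangle_\alpha\widetilde\delta_y=T_M\big(\varrho^\alpha\widetilde\pi_{2\alpha}+(1-\varrho^\alpha)\widetilde\delta_1\big)$ where $M=\max(|x|,|y|)$, $m=\min(|x|,|y|)$, $\varrho=m/M$ (and $\varrho=0$ if $M=0$), extended by $(\nu_1\vartriangle_\alpha\nu_2)(A)=\int\int(\widetilde\delta_x\vartriangle_\alpha\widetilde\delta_y)(A)\,\nu_1(dx)\nu_2(dy)$. For $x\in\mathbb R$ and $\mu\in\mathcal P_s$ we write $\delta_x\vartriangle_\alpha\mu:=\widetilde\delta_x\vartriangle_\alpha\mu$. $\Psi(t)=(1-|t|^\alpha)_+$. For the measure $\nu$: $F(t)=\nu((-\infty,t])$, $G(t)=\int_{\mathbb R}\Psi(x/t)\,\nu(dx)$ for $t\neq0$, and for $t>0$, $H(t)=2F(t)-1-G(t)=t^{-\alpha}\int_{[-t,t]}|x|^\alpha\nu(dx)$. The Kendall random walk with step distribution $\nu$ is the Markov chain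 $(X_n)_{n\ge0}$ with $X_0=0$ and transition kernel $\mathbb P(X_{k+1}\in A\mid X_k=x)=(\delta_x\vartriangle_\alpha\nu)(A)$. *)

theory Defs
  imports "HOL-Probability.Probability"
begin

definition Psi :: "real \<Rightarrow> real \<Rightarrow> real" where
  "Psi \<alpha> t = max 0 (1 - \<bar>t\<bar> powr \<alpha>)"

definition sym_measure :: "real measure \<Rightarrow> bool" where
  "sym_measure \<nu> \<longleftrightarrow> prob_space \<nu> \<and> sets \<nu> = sets borel \<and>
     (\<forall>A \<in> sets borel. measure \<nu> (uminus ` A) = measure \<nu> A)"

definition sym_pareto :: "real \<Rightarrow> real measure" where
  "sym_pareto \<alpha> = density lborel
     (\<lambda>y. ennreal (if 1 \<le> \<bar>y\<bar> then \<alpha> * \<bar>y\<bar> powr (-2*\<alpha>-1) else 0))"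

definition tdelta :: "real \<Rightarrow> real set \<Rightarrow> real" where
  "tdelta x A = (indicator A x + indicator A (-x)) / 2"

definition sym_dirac :: "real \<Rightarrow> real measure" where
  "sym_dirac x = measure_of UNIV (sets borel) (\<lambda>A. ennreal (tdelta x A))"

text \<open>(tilde-delta_x Kendall-conv tilde-delta_y)(A)
  = T_M (rho^alpha pi_{2alpha} + (1 - rho^alpha) tilde-delta_1)(A), T_0 lambda = delta_0,
  where T_c lambda (A) = lambda {z. c z \<in> A}.\<close>
definition kendall_pair :: "real \<Rightarrow> real \<Rightarrow> real \<Rightarrow> real set \<Rightarrow> real" where
  "kendall_pair \<alpha> x y A =
     (let M = max \<bar>x\<bar> \<bar>y\<bar>; m = min \<bar>x\<bar> \<bar>y\<bar> in
      if M = 0 then indicator A 0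
      else (let \<rho> = m / M; B = (\<lambda>z. M * z) -` A in
            \<rho> powr \<alpha> * measure (sym_pareto \<alpha>) B + (1 - \<rho> powr \<alpha>) * tdelta 1 B))"

definition kendall_conv :: "real \<Rightarrow> real measure \<Rightarrow> real measure \<Rightarrow> real measure" where
  "kendall_conv \<alpha> \<nu>1 \<nu>2 = measure_of UNIV (sets borel)
     (\<lambda>A. ennreal (LINT x|\<nu>1. LINT y|\<nu>2. kendall_pair \<alpha> x y A))"

definition kendall_kernel :: "real \<Rightarrow> real measure \<Rightarrow> real \<Rightarrow> real measure" where
  "kendall_kernel \<alpha> \<nu> x = kendall_conv \<alpha> (sym_dirac x) \<nu>"

text \<open>passage k x = P_x(X_1 \<le> a, ..., X_k \<le> a, X_{k+1} > a) for the Markov chain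
  with kernel kendall_kernel started at x (joint law of a Markov chain via iterated kernels).\<close>
primrec kendall_passage :: "real \<Rightarrow> real measure \<Rightarrow> real \<Rightarrow> nat \<Rightarrow> real \<Rightarrow> real" where
  "kendall_passage \<alpha> \<nu> a 0 x = measure (kendall_kernel \<alpha> \<nu> x) {a<..}"
| "kendall_passage \<alpha> \<nu> a (Suc k) x =
     (LINT y|kendall_kernel \<alpha> \<nu> x. indicator {..a} y * kendall_passage \<alpha> \<nu> a k y)"

definition first_passage_prob :: "real \<Rightarrow> real measure \<Rightarrow> real \<Rightarrow> nat \<Rightarrow> real" where
  "first_passage_prob \<alpha> \<nu> a n = kendall_passage \<alpha> \<nu> a (n - 1) 0"

definition kG :: "real \<Rightarrow> real measure \<Rightarrow> real \<Rightarrow> real" where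
  "kG \<alpha> \<nu> t = (LINT x|\<nu>. Psi \<alpha> (x / t))"

definition kH :: "real \<Rightarrow> real measure \<Rightarrow> real \<Rightarrow> real" where
  "kH \<alpha> \<nu> t = t powr (-\<alpha>) * (LINT x|\<nu>. indicator {-t..t} x * \<bar>x\<bar> powr \<alpha>)"

end

theory Submission
  imports Defs
begin


lemma sigma_algebra_borel_UNIV: "sigma_algebra UNIV (sets (borel::real measure))"
  using sets.sigma_algebra_axioms[of borel] by simp

lemma sets_mo[simp]: "sets (measure_of UNIV (sets borel) \<mu>) = sets (borel::real measure)"
  by (simp add: sets.sigma_sets_eq[of borel, simplified])

lemma space_mo[simp]: "space (measure_of UNIV (sets borel) \<mu>) = (UNIV::real set)"
  by (simp add: space_measure_of_conv)

lemma ennreal_tdelta: "ennreal (tdelta x A) = (indicator A x + indicator A (-x)) / 2"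
  unfolding tdelta_def
  by (simp add: divide_ennreal[symmetric] ennreal_plus ennreal_indicator)

lemma tdelta_ca:
  assumes "disjoint_family A"
  shows "(\<Sum>i. ennreal (tdelta x (A i))) = ennreal (tdelta x (\<Union>i. A i))"
proof -
  have "(\<Sum>i. ennreal (tdelta x (A i))) = (\<Sum>i. indicator (A i) x * inverse 2 + indicator (A i) (-x) * inverse 2)"
    by (simp add: ennreal_tdelta divide_ennreal_def distrib_right)
  also have "\<dots> = (\<Sum>i. indicator (A i) x) * inverse 2 + (\<Sum>i. indicator (A i) (-x)) * inverse 2"
    by (simp add: suminf_add[symmetric] ennreal_suminf_multc)
  also have "\<dots> = ennreal (tdelta x (\<Union>i. A i))"
    by (simp add: suminf_indicator[OF assms] ennreal_tdelta divide_ennreal_def distrib_right)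
  finally show ?thesis .
qed

lemma emeasure_sym_dirac:
  assumes "A \<in> sets borel"
  shows "emeasure (sym_dirac x) A = ennreal (tdelta x A)"
  unfolding sym_dirac_def
proof (rule emeasure_measure_of_sigma[OF sigma_algebra_borel_UNIV _ _ assms])
  show "positive (sets borel) (\<lambda>A. ennreal (tdelta x A))"
    by (simp add: positive_def tdelta_def)
  show "countably_additive (sets borel) (\<lambda>A. ennreal (tdelta x A))"
    by (auto simp: countably_additive_def tdelta_ca)
qed

lemma sets_sym_dirac[simp]: "sets (sym_dirac x) = sets borel"
  by (simp add: sym_dirac_def)

lemma space_sym_dirac[simp]: "space (sym_dirac x) = UNIV"
  by (simp add: sym_dirac_def)

lemma prob_space_sym_dirac: "prob_space (sym_dirac x)"
  by (rule prob_spaceI) (simp add: emeasure_sym_dirac tdelta_def)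

lemma integral_sym_dirac:
  fixes f :: "real \<Rightarrow> real"
  assumes f: "f \<in> borel_measurable borel" and sym: "f (-x) = f x"
  shows "(LINT z|sym_dirac x. f z) = f x"
proof -
  interpret prob_space "sym_dirac x" by (rule prob_space_sym_dirac)
  have S: "UNIV - {x, -x} \<in> sets borel" by measurable
  have N: "UNIV - {x, -x} \<in> null_sets (sym_dirac x)"
    unfolding null_sets_def using S by (simp add: emeasure_sym_dirac tdelta_def)
  have "AE z in sym_dirac x. f z = f x"
    by (rule AE_I'[OF N]) (use sym in auto)
  moreover have "f \<in> borel_measurable (sym_dirac x)"
    using f measurable_cong_sets[OF sets_sym_dirac refl] by blast
  ultimately have "(LINT z|sym_dirac x. f z) = (LINT z|sym_dirac x. f x)"
    by (intro integral_cong_AE) auto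
  also have "\<dots> = f x" using prob_space by (simp add: lebesgue_integral_const)
  finally show ?thesis .
qed


definition pd :: "real \<Rightarrow> real \<Rightarrow> real" where
  "pd \<alpha> y = (if 1 \<le> \<bar>y\<bar> then \<alpha> * \<bar>y\<bar> powr (-2*\<alpha>-1) else 0)"

lemma sym_pareto_pd: "sym_pareto \<alpha> = density lborel (\<lambda>y. ennreal (pd \<alpha> y))"
  by (simp add: sym_pareto_def pd_def)

lemma pd_meas[measurable]: "pd \<alpha> \<in> borel_measurable borel"
  unfolding pd_def by measurable

lemma sets_pareto[simp]: "sets (sym_pareto \<alpha>) = sets borel"
  by (simp add: sym_pareto_def)

lemma space_pareto[simp]: "space (sym_pareto \<alpha>) = UNIV"
  by (simp add: sym_pareto_def)

lemma measurable_pareto[simp]: "measurable (sym_pareto \<alpha>) N = measurable borel N"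
  by (rule measurable_cong_sets) auto

lemma pd_neg[simp]: "pd \<alpha> (-y) = pd \<alpha> y"
  by (simp add: pd_def)

lemma pareto_sym:
  assumes [measurable]: "f \<in> borel_measurable borel"
  shows "(\<integral>\<^sup>+z. f (-z) \<partial>sym_pareto \<alpha>) = (\<integral>\<^sup>+z. f z \<partial>sym_pareto \<alpha>)"
proof -
  have "(\<integral>\<^sup>+z. f z \<partial>sym_pareto \<alpha>) = (\<integral>\<^sup>+z. ennreal (pd \<alpha> z) * f z \<partial>lborel)"
    unfolding sym_pareto_pd by (rule nn_integral_density) auto
  also have "\<dots> = (\<integral>\<^sup>+z. ennreal (pd \<alpha> z) * f (- z) \<partial>lborel)"
    using nn_integral_real_affine[of "\<lambda>z. ennreal (pd \<alpha> z) * f z" "-1" 0] by simp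
  also have "\<dots> = (\<integral>\<^sup>+z. f (-z) \<partial>sym_pareto \<alpha>)"
    unfolding sym_pareto_pd by (rule nn_integral_density[symmetric]) auto
  finally show ?thesis by simp
qed

lemma pareto_null: "emeasure (sym_pareto \<alpha>) {-1..1} = 0"
proof -
  have "emeasure (sym_pareto \<alpha>) {-1..1} = (\<integral>\<^sup>+z. ennreal (pd \<alpha> z) * indicator {-1..1} z \<partial>lborel)"
    unfolding sym_pareto_pd by (rule emeasure_density) auto
  also have "\<dots> = integral\<^sup>N lborel (\<lambda>z::real. 0)"
  proof (rule nn_integral_cong_AE)
    show "AE z in lborel. ennreal (pd \<alpha> z) * indicator {-1..1} z = 0"
      using AE_lborel_singleton[of 1] AE_lborel_singleton[of "-1"]
      by eventually_elim (auto simp: pd_def indicator_def)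
  qed
  finally show ?thesis by simp
qed

lemma pareto_null_sets: "{-1..1} \<in> null_sets (sym_pareto \<alpha>)"
  using pareto_null by (auto simp: null_sets_def)

lemma pareto_tail:
  assumes "0 < \<alpha>" "1 \<le> t"
  shows "emeasure (sym_pareto \<alpha>) {t<..} = ennreal (t powr (-2*\<alpha>) / 2)"
proof -
  have "emeasure (sym_pareto \<alpha>) {t<..} = (\<integral>\<^sup>+z. ennreal (pd \<alpha> z) * indicator {t<..} z \<partial>lborel)"
    unfolding sym_pareto_pd by (rule emeasure_density) auto
  also have "\<dots> = (\<integral>\<^sup>+z. ennreal (\<alpha> * z powr (-2*\<alpha>-1)) * indicator {t..} z \<partial>lborel)"
  proof (rule nn_integral_cong_AE)
    show "AE z in lborel. ennreal (pd \<alpha> z) * indicator {t<..} z = ennreal (\<alpha> * z powr (-2*\<alpha>-1)) * indicator {t..} z"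
      using AE_lborel_singleton[of t]
      by eventually_elim (use assms in \<open>auto simp: pd_def indicator_def\<close>)
  qed
  also have "\<dots> = ennreal (0 - (- (t powr (-2*\<alpha>)) / 2))"
  proof (rule nn_integral_FTC_atLeast)
    show "(\<lambda>z. \<alpha> * z powr (- 2 * \<alpha> - 1)) \<in> borel_measurable borel" by measurable
    fix x assume x: "t \<le> x"
    then have "0 < x" using assms by simp
    show "0 \<le> \<alpha> * x powr (- 2 * \<alpha> - 1)" using assms by simp
    have d: "((\<lambda>z. z powr (-2*\<alpha>)) has_real_derivative (-2*\<alpha>) * x powr (-2*\<alpha> - 1)) (at x)"
      by (rule has_real_derivative_powr[OF \<open>0 < x\<close>])
    have "((\<lambda>z. - (z powr (-2*\<alpha>)) / 2) has_real_derivative - ((-2*\<alpha>) * x powr (-2*\<alpha> - 1)) / 2) (at x)"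
      using DERIV_cdivide[OF DERIV_minus[OF d], of 2] by simp
    then show "((\<lambda>z. - (z powr (-2*\<alpha>)) / 2) has_real_derivative \<alpha> * x powr (- 2 * \<alpha> - 1)) (at x)"
      by simp
  next
    have lim: "((\<lambda>z. z powr (-2*\<alpha>)) \<longlongrightarrow> 0) at_top"
      using assms by (intro tendsto_neg_powr) (auto simp: filterlim_ident)
    show "((\<lambda>z. - (z powr (-2*\<alpha>)) / 2) \<longlongrightarrow> 0) at_top"
      using tendsto_divide[OF tendsto_minus[OF lim] tendsto_const, of 2] by simp
  qed
  finally show ?thesis by simp
qed

lemma pareto_tail_neg:
  assumes "0 < \<alpha>" "1 \<le> t"
  shows "emeasure (sym_pareto \<alpha>) {..<-t} = ennreal (t powr (-2*\<alpha>) / 2)"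
proof -
  have "emeasure (sym_pareto \<alpha>) {..<-t} = (\<integral>\<^sup>+z. indicator {..<-t} z \<partial>sym_pareto \<alpha>)"
    by simp
  also have "\<dots> = (\<integral>\<^sup>+z. indicator {..<-t} (-z) \<partial>sym_pareto \<alpha>)"
    by (rule pareto_sym[symmetric]) auto
  also have "\<dots> = (\<integral>\<^sup>+z. indicator {t<..} z \<partial>sym_pareto \<alpha>)"
    by (intro nn_integral_cong) (auto simp: indicator_def)
  also have "\<dots> = ennreal (t powr (-2*\<alpha>) / 2)"
    using pareto_tail[OF assms] by simp
  finally show ?thesis .
qed

lemma prob_space_pareto:
  assumes "0 < \<alpha>"
  shows "prob_space (sym_pareto \<alpha>)"
proof (rule prob_spaceI)
  have "emeasure (sym_pareto \<alpha>) (UNIV - {-1..1}) = emeasure (sym_pareto \<alpha>) UNIV"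
    by (rule emeasure_Diff_null_set[OF pareto_null_sets]) auto
  moreover have "UNIV - {-1..1} = {1<..} \<union> {..<-1::real}" by auto
  moreover have "emeasure (sym_pareto \<alpha>) ({1<..} \<union> {..<-1}) =
      emeasure (sym_pareto \<alpha>) {1<..} + emeasure (sym_pareto \<alpha>) {..<-1}"
    by (rule plus_emeasure[symmetric]) auto
  moreover have "emeasure (sym_pareto \<alpha>) {1<..} + emeasure (sym_pareto \<alpha>) {..<-1} = ennreal (1/2) + ennreal (1/2)"
    using pareto_tail[OF assms, of 1] pareto_tail_neg[OF assms, of 1] by simp
  moreover have "ennreal (1/2) + ennreal (1/2) = 1"
    by (subst ennreal_plus[symmetric]) auto
  ultimately show "emeasure (sym_pareto \<alpha>) (space (sym_pareto \<alpha>)) = 1"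
    by simp
qed

lemma pareto_Icc_moment:
  assumes "0 < \<alpha>" "1 \<le> b"
  shows "(\<integral>\<^sup>+z. ennreal (\<alpha> * z powr (-\<alpha>-1)) * indicator {1..b} z \<partial>lborel) = ennreal (1 - b powr (-\<alpha>))"
proof -
  have "(\<integral>\<^sup>+z. ennreal (\<alpha> * z powr (-\<alpha>-1)) * indicator {1..b} z \<partial>lborel) = ennreal ((- (b powr (-\<alpha>))) - (- (1 powr (-\<alpha>))))"
  proof (rule nn_integral_FTC_Icc)
    show "(\<lambda>z. \<alpha> * z powr (-\<alpha>-1)) \<in> borel_measurable borel" by measurable
    show "1 \<le> b" by fact
    fix x :: real assume x: "x \<in> {1..b}"
    then have "0 < x" by simp
    show "0 \<le> \<alpha> * x powr (-\<alpha>-1)" using assms by simp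
    have "((\<lambda>z. z powr (-\<alpha>)) has_real_derivative (-\<alpha>) * x powr (-\<alpha> - 1)) (at x)"
      by (rule has_real_derivative_powr[OF \<open>0 < x\<close>])
    then have "((\<lambda>z. - (z powr (-\<alpha>))) has_real_derivative - ((-\<alpha>) * x powr (-\<alpha> - 1))) (at x)"
      by (intro derivative_intros)
    then show "((\<lambda>z. - (z powr (-\<alpha>))) has_real_derivative \<alpha> * x powr (-\<alpha> - 1)) (at x)"
      by simp
  qed
  then show ?thesis by simp
qed

lemma pareto_moment:
  assumes "0 < \<alpha>" "1 \<le> b"
  shows "(\<integral>\<^sup>+z. ennreal (indicator {-b..b} z * \<bar>z\<bar> powr \<alpha>) \<partial>sym_pareto \<alpha>) = ennreal (2 * (1 - b powr (-\<alpha>)))"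
proof -
  define h where "h z = ennreal (\<alpha> * z powr (-\<alpha>-1)) * indicator {1..b} z" for z
  have hm[measurable]: "h \<in> borel_measurable borel" unfolding h_def by measurable
  have "(\<integral>\<^sup>+z. ennreal (indicator {-b..b} z * \<bar>z\<bar> powr \<alpha>) \<partial>sym_pareto \<alpha>) =
      (\<integral>\<^sup>+z. ennreal (pd \<alpha> z) * ennreal (indicator {-b..b} z * \<bar>z\<bar> powr \<alpha>) \<partial>lborel)"
    unfolding sym_pareto_pd by (rule nn_integral_density) auto
  also have "\<dots> = (\<integral>\<^sup>+z. h z + h (-z) \<partial>lborel)"
  proof (rule nn_integral_cong)
    fix z :: real
    have e: "\<alpha> * \<bar>z\<bar> powr (-2*\<alpha>-1) * \<bar>z\<bar> powr \<alpha> = \<alpha> * \<bar>z\<bar> powr (-\<alpha>-1)"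
      by (simp add: mult.assoc powr_add[symmetric])
    show "ennreal (pd \<alpha> z) * ennreal (indicator {-b..b} z * \<bar>z\<bar> powr \<alpha>) = h z + h (-z)"
      using e assms
      by (cases "0 \<le> z") (auto simp: h_def pd_def indicator_def ennreal_mult[symmetric] abs_if)
  qed
  also have "\<dots> = (\<integral>\<^sup>+z. h z \<partial>lborel) + (\<integral>\<^sup>+z. h (-z) \<partial>lborel)"
    by (rule nn_integral_add) auto
  also have "(\<integral>\<^sup>+z. h (-z) \<partial>lborel) = (\<integral>\<^sup>+z. h z \<partial>lborel)"
    using nn_integral_real_affine[OF hm, of "-1" 0] by simp
  also have "(\<integral>\<^sup>+z. h z \<partial>lborel) = ennreal (1 - b powr (-\<alpha>))"
    unfolding h_def by (rule pareto_Icc_moment[OF assms])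
  also have "ennreal (1 - b powr (-\<alpha>)) + ennreal (1 - b powr (-\<alpha>)) = ennreal (2 * (1 - b powr (-\<alpha>)))"
  proof -
    have "b powr (-\<alpha>) \<le> b powr 0" using powr_mono[of "-\<alpha>" 0 b] assms by simp
    then have "0 \<le> 1 - b powr (-\<alpha>)" using assms by simp
    then show ?thesis by (subst ennreal_plus[symmetric]) auto
  qed
  finally show ?thesis .
qed

lemma pareto_moment_small:
  assumes "b < 1"
  shows "(\<integral>\<^sup>+z. ennreal (indicator {-b..b} z * \<bar>z\<bar> powr \<alpha>) \<partial>sym_pareto \<alpha>) = 0"
proof -
  have "(\<integral>\<^sup>+z. ennreal (indicator {-b..b} z * \<bar>z\<bar> powr \<alpha>) \<partial>sym_pareto \<alpha>) =
      (\<integral>\<^sup>+z. ennreal (pd \<alpha> z) * ennreal (indicator {-b..b} z * \<bar>z\<bar> powr \<alpha>) \<partial>lborel)"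
    unfolding sym_pareto_pd by (rule nn_integral_density) auto
  also have "\<dots> = integral\<^sup>N lborel (\<lambda>z::real. 0)"
    using assms by (intro nn_integral_cong) (auto simp: pd_def indicator_def)
  finally show ?thesis by simp
qed


locale kw =
  fixes \<alpha> :: real and \<nu> :: "real measure"
  assumes alpha_pos: "0 < \<alpha>" and nu_prob: "prob_space \<nu>" and nu_sets: "sets \<nu> = sets borel"
begin

lemma space_nu[simp]: "space \<nu> = UNIV"
  using sets_eq_imp_space_eq[OF nu_sets] by simp

lemma measurable_nu[simp]: "measurable \<nu> N = measurable borel N"
  by (rule measurable_cong_sets) (auto simp: nu_sets)

lemma pi_prob: "prob_space (sym_pareto \<alpha>)"
  by (rule prob_space_pareto[OF alpha_pos])

lemma meas_scale:
  assumes A: "A \<in> sets borel"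
  shows "(\<lambda>c. emeasure (sym_pareto \<alpha>) ((\<lambda>z. c*z) -` A)) \<in> borel_measurable borel"
proof -
  interpret P: prob_space "sym_pareto \<alpha>" by (rule pi_prob)
  define Q where "Q = {p \<in> space (borel \<Otimes>\<^sub>M borel). fst p * snd p \<in> (A::real set)}"
  have "Q \<in> sets (borel \<Otimes>\<^sub>M (borel::real measure))"
    unfolding Q_def using A by measurable
  then have Q: "Q \<in> sets (borel \<Otimes>\<^sub>M sym_pareto \<alpha>)"
    by (simp cong: sets_pair_measure_cong)
  have "Pair c -` Q = (\<lambda>z. c*z) -` A" for c
    by (auto simp: Q_def space_pair_measure)
  then show ?thesis
    using P.measurable_emeasure_Pair[OF Q] by simp
qed

lemma meas_scale_measure[measurable (raw)]:
  assumes "A \<in> sets borel" and "f \<in> borel_measurable M"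
  shows "(\<lambda>x. measure (sym_pareto \<alpha>) ((\<lambda>z. f x * z) -` A)) \<in> borel_measurable M"
proof -
  have "(\<lambda>c. enn2real (emeasure (sym_pareto \<alpha>) ((\<lambda>z. c*z) -` A))) \<in> borel_measurable borel"
    using meas_scale[OF assms(1)] by measurable
  then have "(\<lambda>c. measure (sym_pareto \<alpha>) ((\<lambda>z. c*z) -` A)) \<in> borel_measurable borel"
    by (simp add: measure_def)
  from measurable_compose[OF assms(2) this] show ?thesis by simp
qed

lemma tdelta_scale: "tdelta 1 ((\<lambda>z. c*z) -` A) = (indicator A c + indicator A (-c)) / 2"
  by (simp add: tdelta_def indicator_def)

lemma pair_eq: "kendall_pair \<alpha> x y A =
  (if max \<bar>x\<bar> \<bar>y\<bar> = 0 then indicator A 0 else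
   (min \<bar>x\<bar> \<bar>y\<bar> / max \<bar>x\<bar> \<bar>y\<bar>) powr \<alpha> * measure (sym_pareto \<alpha>) ((\<lambda>z. max \<bar>x\<bar> \<bar>y\<bar> * z) -` A)
   + (1 - (min \<bar>x\<bar> \<bar>y\<bar> / max \<bar>x\<bar> \<bar>y\<bar>) powr \<alpha>) * ((indicator A (max \<bar>x\<bar> \<bar>y\<bar>) + indicator A (- max \<bar>x\<bar> \<bar>y\<bar>)) / 2))"
  unfolding kendall_pair_def Let_def tdelta_scale by simp

lemma pair_meas:
  assumes A[measurable]: "A \<in> sets borel"
  shows "(\<lambda>p. kendall_pair \<alpha> (fst p) (snd p) A) \<in> borel_measurable (borel \<Otimes>\<^sub>M borel)"
  unfolding pair_eq by measurable

lemma pair_meas_y: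
  assumes A: "A \<in> sets borel"
  shows "(\<lambda>y. kendall_pair \<alpha> x y A) \<in> borel_measurable borel"
  using measurable_compose_Pair1[OF _ pair_meas[OF A], of x] by simp

lemma pair_neg[simp]: "kendall_pair \<alpha> (-x) y A = kendall_pair \<alpha> x y A"
  by (simp add: kendall_pair_def)

lemma rho_bounds:
  shows "0 \<le> (min \<bar>x\<bar> \<bar>y\<bar> / max \<bar>x\<bar> \<bar>y\<bar>) powr \<alpha>" "(min \<bar>x\<bar> \<bar>y\<bar> / max \<bar>x\<bar> \<bar>y\<bar>) powr \<alpha> \<le> 1"
proof -
  show "0 \<le> (min \<bar>x\<bar> \<bar>y\<bar> / max \<bar>x\<bar> \<bar>y\<bar>) powr \<alpha>" by simp
  have "min \<bar>x\<bar> \<bar>y\<bar> / max \<bar>x\<bar> \<bar>y\<bar> \<le> 1"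
    by (cases "max \<bar>x\<bar> \<bar>y\<bar> = 0") (auto simp: divide_le_eq_1)
  then show "(min \<bar>x\<bar> \<bar>y\<bar> / max \<bar>x\<bar> \<bar>y\<bar>) powr \<alpha> \<le> 1"
    using alpha_pos by (intro powr_le1) auto
qed

lemma pair_bounds: "0 \<le> kendall_pair \<alpha> x y A" "kendall_pair \<alpha> x y A \<le> 1"
proof -
  interpret P: prob_space "sym_pareto \<alpha>" by (rule pi_prob)
  define r where "r = (min \<bar>x\<bar> \<bar>y\<bar> / max \<bar>x\<bar> \<bar>y\<bar>) powr \<alpha>"
  define m where "m = measure (sym_pareto \<alpha>) ((\<lambda>z. max \<bar>x\<bar> \<bar>y\<bar> * z) -` A)"
  define t where "t = (indicator A (max \<bar>x\<bar> \<bar>y\<bar>) + indicator A (- max \<bar>x\<bar> \<bar>y\<bar>)) / (2::real)"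
  have r: "0 \<le> r" "r \<le> 1" using rho_bounds unfolding r_def by auto
  have m: "0 \<le> m" "m \<le> 1" unfolding m_def by auto
  have t: "0 \<le> t" "t \<le> 1" unfolding t_def by (auto simp: indicator_def)
  have "0 \<le> r * m + (1 - r) * t" using r m t by simp
  moreover have "r * m + (1 - r) * t \<le> r * 1 + (1 - r) * 1"
    using r m t by (intro add_mono mult_left_mono) auto
  ultimately show "0 \<le> kendall_pair \<alpha> x y A" "kendall_pair \<alpha> x y A \<le> 1"
    unfolding pair_eq r_def[symmetric] m_def[symmetric] t_def[symmetric]
    by (auto simp: indicator_def)
qed

lemma pair_ca:
  assumes disj: "disjoint_family A" and A: "range A \<subseteq> sets borel"
  shows "(\<Sum>i. ennreal (kendall_pair \<alpha> x y (A i))) = ennreal (kendall_pair \<alpha> x y (\<Union>i. A i))"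
proof (cases "max \<bar>x\<bar> \<bar>y\<bar> = 0")
  case True
  show ?thesis
    unfolding pair_eq if_P[OF True] by (simp add: ennreal_indicator suminf_indicator[OF disj])
next
  case False
  interpret P: prob_space "sym_pareto \<alpha>" by (rule pi_prob)
  define M where "M = max \<bar>x\<bar> \<bar>y\<bar>"
  define r where "r = (min \<bar>x\<bar> \<bar>y\<bar> / M) powr \<alpha>"
  define B where "B i = (\<lambda>z. M * z) -` A i" for i
  have r: "0 \<le> r" "r \<le> 1" using rho_bounds unfolding r_def M_def by auto
  have Bs: "range B \<subseteq> sets (sym_pareto \<alpha>)"
  proof -
    { fix i have Ai: "A i \<in> sets borel" using A by auto
      have "(\<lambda>z::real. M*z) \<in> borel_measurable borel" by measurable
      from measurable_sets[OF this Ai] have "B i \<in> sets borel" unfolding B_def by simp }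
    then show ?thesis by auto
  qed
  have Bd: "disjoint_family B"
    using disj unfolding disjoint_family_on_def B_def by auto
  have UB: "(\<Union>i. B i) = (\<lambda>z. M * z) -` (\<Union>i. A i)" unfolding B_def by auto
  have eq: "ennreal (kendall_pair \<alpha> x y C) = ennreal r * emeasure (sym_pareto \<alpha>) ((\<lambda>z. M * z) -` C) + ennreal (1 - r) * ennreal (tdelta 1 ((\<lambda>z. M * z) -` C))"
    for C
  proof -
    have "kendall_pair \<alpha> x y C = r * measure (sym_pareto \<alpha>) ((\<lambda>z. M * z) -` C) + (1 - r) * tdelta 1 ((\<lambda>z. M * z) -` C)"
      using False unfolding kendall_pair_def Let_def r_def M_def by simp
    moreover have "0 \<le> tdelta 1 D" for D by (simp add: tdelta_def)
    ultimately show ?thesis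
      using r by (simp add: ennreal_plus ennreal_mult P.emeasure_eq_measure)
  qed
  have "(\<Sum>i. ennreal (kendall_pair \<alpha> x y (A i))) =
      (\<Sum>i. ennreal r * emeasure (sym_pareto \<alpha>) (B i) + ennreal (1 - r) * ennreal (tdelta 1 (B i)))"
    unfolding eq B_def ..
  also have "\<dots> = ennreal r * (\<Sum>i. emeasure (sym_pareto \<alpha>) (B i)) + ennreal (1 - r) * (\<Sum>i. ennreal (tdelta 1 (B i)))"
    by (simp add: suminf_add[symmetric] ennreal_suminf_cmult)
  also have "\<dots> = ennreal r * emeasure (sym_pareto \<alpha>) (\<Union>i. B i) + ennreal (1 - r) * ennreal (tdelta 1 (\<Union>i. B i))"
    by (simp add: suminf_emeasure[OF Bs Bd] tdelta_ca[OF Bd])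
  also have "\<dots> = ennreal (kendall_pair \<alpha> x y (\<Union>i. A i))"
    unfolding eq UB ..
  finally show ?thesis .
qed

lemma pair_empty[simp]: "kendall_pair \<alpha> x y {} = 0"
  by (simp add: pair_eq)

lemma pair_UNIV[simp]: "kendall_pair \<alpha> x y UNIV = 1"
proof -
  interpret P: prob_space "sym_pareto \<alpha>" by (rule pi_prob)
  show ?thesis by (simp add: pair_eq P.prob_space[simplified])
qed

lemma integrable_pair: "A \<in> sets borel \<Longrightarrow> integrable \<nu> (\<lambda>y. kendall_pair \<alpha> x y A)"
proof -
  assume A: "A \<in> sets borel"
  interpret N: prob_space \<nu> by (rule nu_prob)
  show ?thesis
    using pair_bounds[of x _ A] pair_meas_y[OF A, of x]
    by (intro N.integrable_const_bound[where B=1]) auto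
qed

lemma mu_eq:
  assumes A: "A \<in> sets borel"
  shows "ennreal (LINT x'|sym_dirac x. LINT y|\<nu>. kendall_pair \<alpha> x' y A) = (\<integral>\<^sup>+y. ennreal (kendall_pair \<alpha> x y A) \<partial>\<nu>)"
proof -
  interpret N: prob_space \<nu> by (rule nu_prob)
  have pm: "(\<lambda>p. kendall_pair \<alpha> (fst p) (snd p) A) \<in> borel_measurable (borel \<Otimes>\<^sub>M \<nu>)"
    using pair_meas[OF A] by (simp cong: measurable_cong_sets sets_pair_measure_cong add: nu_sets)
  have "(\<lambda>x'. LINT y|\<nu>. kendall_pair \<alpha> x' y A) \<in> borel_measurable borel"
    by (rule N.borel_measurable_lebesgue_integral) (use pm in \<open>simp add: case_prod_beta'\<close>)
  then have "(LINT x'|sym_dirac x. LINT y|\<nu>. kendall_pair \<alpha> x' y A) = (LINT y|\<nu>. kendall_pair \<alpha> x y A)"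
    by (rule integral_sym_dirac) simp
  also have "ennreal \<dots> = (\<integral>\<^sup>+y. ennreal (kendall_pair \<alpha> x y A) \<partial>\<nu>)"
    by (rule nn_integral_eq_integral[symmetric]) (auto simp: integrable_pair[OF A] pair_bounds)
  finally show ?thesis .
qed

lemma emeasure_kernel:
  assumes A: "A \<in> sets borel"
  shows "emeasure (kendall_kernel \<alpha> \<nu> x) A = (\<integral>\<^sup>+y. ennreal (kendall_pair \<alpha> x y A) \<partial>\<nu>)"
proof -
  define \<mu> where "\<mu> A = ennreal (LINT x'|sym_dirac x. LINT y|\<nu>. kendall_pair \<alpha> x' y A)" for A
  have "emeasure (kendall_kernel \<alpha> \<nu> x) A = \<mu> A"
    unfolding kendall_kernel_def kendall_conv_def \<mu>_def[symmetric]
  proof (rule emeasure_measure_of_sigma[OF sigma_algebra_borel_UNIV _ _ A])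
    show "positive (sets borel) \<mu>"
      by (simp add: positive_def \<mu>_def)
    show "countably_additive (sets borel) \<mu>"
    proof (unfold countably_additive_def, intro allI impI)
      fix B :: "nat \<Rightarrow> real set"
      assume B: "range B \<subseteq> sets borel" "disjoint_family B" "\<Union> (range B) \<in> sets borel"
      have "(\<Sum>i. \<mu> (B i)) = (\<Sum>i. \<integral>\<^sup>+y. ennreal (kendall_pair \<alpha> x y (B i)) \<partial>\<nu>)"
        using B(1) by (simp add: \<mu>_def mu_eq subset_eq)
      also have "\<dots> = (\<integral>\<^sup>+y. (\<Sum>i. ennreal (kendall_pair \<alpha> x y (B i))) \<partial>\<nu>)"
        using B(1) pair_meas_y by (intro nn_integral_suminf[symmetric]) (auto simp: subset_eq)
      also have "\<dots> = (\<integral>\<^sup>+y. ennreal (kendall_pair \<alpha> x y (\<Union>i. B i)) \<partial>\<nu>)"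
        using pair_ca[OF B(2,1)] by simp
      also have "\<dots> = \<mu> (\<Union>i. B i)"
        using B(3) by (simp add: \<mu>_def mu_eq)
      finally show "(\<Sum>i. \<mu> (B i)) = \<mu> (\<Union> (range B))" .
    qed
  qed
  then show ?thesis using mu_eq[OF A] by (simp add: \<mu>_def)
qed

lemma sets_kernel[simp]: "sets (kendall_kernel \<alpha> \<nu> x) = sets borel"
  by (simp add: kendall_kernel_def kendall_conv_def)

lemma space_kernel[simp]: "space (kendall_kernel \<alpha> \<nu> x) = UNIV"
  by (simp add: kendall_kernel_def kendall_conv_def)

lemma measurable_kernel[simp]: "measurable (kendall_kernel \<alpha> \<nu> x) N = measurable borel N"
  by (rule measurable_cong_sets) auto

lemma prob_kernel: "prob_space (kendall_kernel \<alpha> \<nu> x)"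
proof (rule prob_spaceI)
  interpret N: prob_space \<nu> by (rule nu_prob)
  show "emeasure (kendall_kernel \<alpha> \<nu> x) (space (kendall_kernel \<alpha> \<nu> x)) = 1"
    by (simp add: emeasure_kernel N.emeasure_space_1[simplified])
qed

lemma measure_kernel:
  assumes A: "A \<in> sets borel"
  shows "measure (kendall_kernel \<alpha> \<nu> x) A = (LINT y|\<nu>. kendall_pair \<alpha> x y A)"
proof -
  have "emeasure (kendall_kernel \<alpha> \<nu> x) A = ennreal (LINT y|\<nu>. kendall_pair \<alpha> x y A)"
    unfolding emeasure_kernel[OF A]
    by (rule nn_integral_eq_integral) (auto simp: integrable_pair[OF A] pair_bounds)
  moreover have "0 \<le> (LINT y|\<nu>. kendall_pair \<alpha> x y A)"
    by (simp add: pair_bounds)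
  ultimately show ?thesis by (simp add: measure_def)
qed

end


definition JJ :: "real \<Rightarrow> real \<Rightarrow> real \<Rightarrow> (real \<Rightarrow> ennreal) \<Rightarrow> ennreal" where
  "JJ \<alpha> M r f = (if M = 0 then f 0 else
     ennreal r * (\<integral>\<^sup>+z. f (M*z) \<partial>sym_pareto \<alpha>) + ennreal ((1 - r)/2) * (f M + f (-M)))"

context kw
begin

definition mx :: "real \<Rightarrow> real \<Rightarrow> real" where "mx x y = max \<bar>x\<bar> \<bar>y\<bar>"
definition rr :: "real \<Rightarrow> real \<Rightarrow> real" where "rr x y = (min \<bar>x\<bar> \<bar>y\<bar> / max \<bar>x\<bar> \<bar>y\<bar>) powr \<alpha>"

lemma mx_meas[measurable]: "mx x \<in> borel_measurable borel"
  unfolding mx_def by measurable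
lemma rr_meas[measurable]: "rr x \<in> borel_measurable borel"
  unfolding rr_def by measurable

lemma meas_nn_scale[measurable (raw)]:
  assumes f[measurable]: "f \<in> borel_measurable borel" and g[measurable]: "g \<in> borel_measurable M"
  shows "(\<lambda>y. \<integral>\<^sup>+z. f (g y * z) \<partial>sym_pareto \<alpha>) \<in> borel_measurable M"
proof -
  interpret P: prob_space "sym_pareto \<alpha>" by (rule pi_prob)
  have "(\<lambda>(c::real, z::real). f (c * z)) \<in> borel_measurable (borel \<Otimes>\<^sub>M borel)"
    by measurable
  then have "(\<lambda>(c::real, z::real). f (c * z)) \<in> borel_measurable (borel \<Otimes>\<^sub>M sym_pareto \<alpha>)"
    by (simp cong: measurable_cong_sets sets_pair_measure_cong)
  then have "(\<lambda>c. \<integral>\<^sup>+z. f (c * z) \<partial>sym_pareto \<alpha>) \<in> borel_measurable borel"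
    by (rule P.borel_measurable_nn_integral)
  from measurable_compose[OF g this] show ?thesis by simp
qed

lemma JJ_meas[measurable]:
  assumes [measurable]: "f \<in> borel_measurable borel"
  shows "(\<lambda>y. JJ \<alpha> (mx x y) (rr x y) f) \<in> borel_measurable borel"
  unfolding JJ_def by measurable

lemma scale_meas: "u \<in> borel_measurable borel \<Longrightarrow> (\<lambda>z. u (M * z)) \<in> borel_measurable (sym_pareto \<alpha>)"
  by simp

lemma JJ_cmult:
  assumes "u \<in> borel_measurable borel"
  shows "JJ \<alpha> M r (\<lambda>v. c * u v) = c * JJ \<alpha> M r u"
proof (cases "M = 0")
  case True then show ?thesis by (simp add: JJ_def)
next
  case False
  have I: "(\<integral>\<^sup>+z. c * u (M*z) \<partial>sym_pareto \<alpha>) = c * (\<integral>\<^sup>+z. u (M*z) \<partial>sym_pareto \<alpha>)"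
    using scale_meas[OF assms, of M] by (rule nn_integral_cmult)
  show ?thesis unfolding JJ_def if_not_P[OF False] I
    by (simp only: distrib_left mult.left_commute)
qed

lemma JJ_add:
  assumes "u \<in> borel_measurable borel" "v \<in> borel_measurable borel"
  shows "JJ \<alpha> M r (\<lambda>x. v x + u x) = JJ \<alpha> M r v + JJ \<alpha> M r u"
proof (cases "M = 0")
  case True then show ?thesis by (simp add: JJ_def)
next
  case False
  have I: "(\<integral>\<^sup>+z. v (M*z) + u (M*z) \<partial>sym_pareto \<alpha>) = (\<integral>\<^sup>+z. v (M*z) \<partial>sym_pareto \<alpha>) + (\<integral>\<^sup>+z. u (M*z) \<partial>sym_pareto \<alpha>)"
    using scale_meas[OF assms(1), of M] scale_meas[OF assms(2), of M] by (intro nn_integral_add) auto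
  show ?thesis unfolding JJ_def if_not_P[OF False] I
    by (simp only: distrib_left distrib_right ac_simps)
qed

lemma JJ_mono:
  assumes "\<And>v. u v \<le> w v"
  shows "JJ \<alpha> M r u \<le> JJ \<alpha> M r w"
  unfolding JJ_def using assms
  by (auto intro!: add_mono mult_left_mono nn_integral_mono)

lemma JJ_sup:
  assumes inc: "incseq U" and meas: "\<And>i. U i \<in> borel_measurable borel"
  shows "JJ \<alpha> M r (SUP i. U i) = (SUP i. JJ \<alpha> M r (U i))"
proof (cases "M = 0")
  case True
  then show ?thesis by (simp add: JJ_def image_comp)
next
  case False
  have le: "U i v \<le> U j v" if "i \<le> j" for i j v
    using inc that by (auto simp: incseq_def le_fun_def)
  define a where "a i = (\<integral>\<^sup>+z. U i (M*z) \<partial>sym_pareto \<alpha>)" for i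
  define b where "b i = U i M + U i (-M)" for i
  have ia: "incseq a" unfolding a_def incseq_def by (auto intro!: nn_integral_mono le)
  have ib: "incseq b" unfolding b_def incseq_def by (auto intro!: add_mono le)
  have "(\<integral>\<^sup>+z. (SUP i. U i) (M*z) \<partial>sym_pareto \<alpha>) = (\<integral>\<^sup>+z. (SUP i. U i (M*z)) \<partial>sym_pareto \<alpha>)"
    by (simp add: image_comp)
  also have "\<dots> = (SUP i. a i)"
    unfolding a_def using meas
    by (intro nn_integral_monotone_convergence_SUP) (auto simp: incseq_def le_fun_def le)
  finally have A: "(\<integral>\<^sup>+z. (SUP i. U i) (M*z) \<partial>sym_pareto \<alpha>) = (SUP i. a i)" .
  have B: "(SUP i. U i) M + (SUP i. U i) (-M) = (SUP i. b i)"
    unfolding b_def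
    by (subst ennreal_SUP_add) (auto simp: incseq_def le image_comp)
  have "JJ \<alpha> M r (SUP i. U i) = ennreal r * (SUP i. a i) + ennreal ((1 - r)/2) * (SUP i. b i)"
    using False A B by (simp add: JJ_def)
  also have "\<dots> = (SUP i. ennreal r * a i) + (SUP i. ennreal ((1 - r)/2) * b i)"
    by (simp add: SUP_mult_left_ennreal)
  also have "\<dots> = (SUP i. ennreal r * a i + ennreal ((1 - r)/2) * b i)"
    using ia ib
    by (intro ennreal_SUP_add[symmetric]) (auto simp: incseq_def intro!: mult_left_mono)
  also have "\<dots> = (SUP i. JJ \<alpha> M r (U i))"
    using False by (simp add: JJ_def a_def b_def)
  finally show ?thesis .
qed

lemma JJ_indicator:
  assumes A: "A \<in> sets borel"
  shows "JJ \<alpha> (mx x y) (rr x y) (indicator A) = ennreal (kendall_pair \<alpha> x y A)"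
proof (cases "mx x y = 0")
  case True
  then have m0: "max \<bar>x\<bar> \<bar>y\<bar> = 0" by (simp add: mx_def)
  show ?thesis unfolding JJ_def True pair_eq if_P[OF m0] by (simp add: ennreal_indicator)
next
  case False
  interpret P: prob_space "sym_pareto \<alpha>" by (rule pi_prob)
  define M where "M = mx x y"
  define r where "r = rr x y"
  have r: "0 \<le> r" "r \<le> 1" using rho_bounds unfolding r_def rr_def by auto
  have Bs: "(\<lambda>z. M * z) -` A \<in> sets (sym_pareto \<alpha>)"
  proof -
    have "(\<lambda>z::real. M*z) \<in> borel_measurable borel" by measurable
    from measurable_sets[OF this A] show ?thesis by simp
  qed
  have "(\<integral>\<^sup>+z. indicator A (M*z) \<partial>sym_pareto \<alpha>) = (\<integral>\<^sup>+z. indicator ((\<lambda>z. M * z) -` A) z \<partial>sym_pareto \<alpha>)"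
    by (simp add: indicator_def)
  also have "\<dots> = ennreal (measure (sym_pareto \<alpha>) ((\<lambda>z. M * z) -` A))"
    using Bs by (simp add: P.emeasure_eq_measure)
  finally have I: "(\<integral>\<^sup>+z. indicator A (M*z) \<partial>sym_pareto \<alpha>) = ennreal (measure (sym_pareto \<alpha>) ((\<lambda>z. M * z) -` A))" .
  have t: "0 \<le> (indicator A M + indicator A (-M)) / (2::real)" by (simp add: indicator_def)
  have "ennreal ((1 - r)/2) * (indicator A M + indicator A (-M)) = ennreal ((1 - r) * ((indicator A M + indicator A (-M)) / 2))"
    using r by (simp add: ennreal_mult[symmetric] ennreal_plus[symmetric] ennreal_indicator[symmetric] del: ennreal_plus)
  note e2 = this
  define m where "m = measure (sym_pareto \<alpha>) ((\<lambda>z. M * z) -` A)"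
  define t where "t = (indicator A M + indicator A (-M)) / (2::real)"
  have m: "0 \<le> m" unfolding m_def by simp
  have PE: "kendall_pair \<alpha> x y A = r * m + (1 - r) * t"
    using False unfolding pair_eq r_def rr_def M_def mx_def m_def t_def by simp
  have JE: "JJ \<alpha> M r (indicator A) = ennreal r * ennreal m + ennreal ((1 - r) * t)"
    using False I e2 unfolding JJ_def M_def m_def t_def by simp
  have "ennreal (r*m + (1-r)*t) = ennreal (r*m) + ennreal ((1-r)*t)"
    using r m t unfolding t_def by (intro ennreal_plus) auto
  also have "ennreal (r*m) = ennreal r * ennreal m"
    using r m by (intro ennreal_mult) auto
  finally show ?thesis
    using PE JE unfolding M_def r_def by simp
qed

lemma kernel_nn:
  assumes f: "f \<in> borel_measurable borel"
  shows "(\<integral>\<^sup>+v. f v \<partial>kendall_kernel \<alpha> \<nu> x) = (\<integral>\<^sup>+y. JJ \<alpha> (mx x y) (rr x y) f \<partial>\<nu>)"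
  using f
proof (induction rule: borel_measurable_induct)
  case (cong f g)
  then have "f = g" by (auto simp: fun_eq_iff)
  then show ?case using cong by simp
next
  case (set A)
  then show ?case
    by (simp add: emeasure_kernel JJ_indicator)
next
  case (mult u c)
  have "(\<integral>\<^sup>+v. c * u v \<partial>kendall_kernel \<alpha> \<nu> x) = c * (\<integral>\<^sup>+v. u v \<partial>kendall_kernel \<alpha> \<nu> x)"
    using mult(2) by (intro nn_integral_cmult) simp
  also have "\<dots> = c * (\<integral>\<^sup>+y. JJ \<alpha> (mx x y) (rr x y) u \<partial>\<nu>)" using mult by simp
  also have "\<dots> = (\<integral>\<^sup>+y. c * JJ \<alpha> (mx x y) (rr x y) u \<partial>\<nu>)"
    using mult(2) by (intro nn_integral_cmult[symmetric]) simp
  also have "\<dots> = (\<integral>\<^sup>+y. JJ \<alpha> (mx x y) (rr x y) (\<lambda>v. c * u v) \<partial>\<nu>)"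
    using mult(2) by (simp add: JJ_cmult)
  finally show ?case .
next
  case (add u v)
  have "(\<integral>\<^sup>+w. v w + u w \<partial>kendall_kernel \<alpha> \<nu> x) = (\<integral>\<^sup>+w. v w \<partial>kendall_kernel \<alpha> \<nu> x) + (\<integral>\<^sup>+w. u w \<partial>kendall_kernel \<alpha> \<nu> x)"
    using add by (intro nn_integral_add) auto
  also have "\<dots> = (\<integral>\<^sup>+y. JJ \<alpha> (mx x y) (rr x y) v \<partial>\<nu>) + (\<integral>\<^sup>+y. JJ \<alpha> (mx x y) (rr x y) u \<partial>\<nu>)"
    using add by simp
  also have "\<dots> = (\<integral>\<^sup>+y. JJ \<alpha> (mx x y) (rr x y) v + JJ \<alpha> (mx x y) (rr x y) u \<partial>\<nu>)"
    using add by (intro nn_integral_add[symmetric]) auto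
  also have "\<dots> = (\<integral>\<^sup>+y. JJ \<alpha> (mx x y) (rr x y) (\<lambda>w. v w + u w) \<partial>\<nu>)"
    using add by (simp add: JJ_add)
  finally show ?case .
next
  case (seq U)
  have incJ: "incseq (\<lambda>i y. JJ \<alpha> (mx x y) (rr x y) (U i))"
    using \<open>incseq U\<close> by (auto simp: incseq_def le_fun_def intro!: JJ_mono)
  have "(\<integral>\<^sup>+v. (SUP i. U i) v \<partial>kendall_kernel \<alpha> \<nu> x) = (\<integral>\<^sup>+v. (SUP i. U i v) \<partial>kendall_kernel \<alpha> \<nu> x)"
    by (simp add: image_comp)
  also have "\<dots> = (SUP i. (\<integral>\<^sup>+v. U i v \<partial>kendall_kernel \<alpha> \<nu> x))"
    using seq by (intro nn_integral_monotone_convergence_SUP) auto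
  also have "\<dots> = (SUP i. (\<integral>\<^sup>+y. JJ \<alpha> (mx x y) (rr x y) (U i) \<partial>\<nu>))"
    using seq by simp
  also have "\<dots> = (\<integral>\<^sup>+y. (SUP i. JJ \<alpha> (mx x y) (rr x y) (U i)) \<partial>\<nu>)"
    using seq incJ by (intro nn_integral_monotone_convergence_SUP[symmetric]) auto
  also have "\<dots> = (\<integral>\<^sup>+y. JJ \<alpha> (mx x y) (rr x y) (SUP i. U i) \<partial>\<nu>)"
    using seq by (simp add: JJ_sup)
  finally show ?case .
qed

end


lemma powr2: "(x::real) powr (2*c) = (x powr c)^2"
  by (metis mult_2 powr_add power2_eq_square)

lemma ennreal_lin2:
  assumes "0 \<le> a" "0 \<le> b" "0 \<le> c" "0 \<le> d"
  shows "ennreal a * ennreal b + ennreal c * ennreal d = ennreal (a*b + c*d)"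
  using assms by (simp add: ennreal_mult ennreal_plus)

locale kwa = kw +
  fixes a :: real
  assumes a_pos: "0 < a"
begin

lemma pi_up:
  assumes "0 < b"
  shows "measure (sym_pareto \<alpha>) {b<..} = (if 1 \<le> b then b powr (-2*\<alpha>)/2 else 1/2)"
proof (cases "1 \<le> b")
  case True
  then show ?thesis using pareto_tail[OF alpha_pos True] by (simp add: measure_def)
next
  case False
  have "emeasure (sym_pareto \<alpha>) {b<..} = emeasure (sym_pareto \<alpha>) ({b<..} - {-1..1})"
    by (rule emeasure_Diff_null_set[OF pareto_null_sets, symmetric]) auto
  also have "{b<..} - {-1..1} = {1<..}" using False assms by auto
  also have "emeasure (sym_pareto \<alpha>) {1<..} = ennreal (1/2)" using pareto_tail[OF alpha_pos, of 1] by simp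
  finally have "measure (sym_pareto \<alpha>) {b<..} = enn2real (ennreal (1/2))" by (simp only: measure_def)
  also have "\<dots> = 1/2" by (rule enn2real_ennreal) simp
  finally show ?thesis using False by simp
qed

lemma pi_down:
  assumes "0 < b"
  shows "measure (sym_pareto \<alpha>) {..<-b} = (if 1 \<le> b then b powr (-2*\<alpha>)/2 else 1/2)"
proof (cases "1 \<le> b")
  case True
  then show ?thesis using pareto_tail_neg[OF alpha_pos True] by (simp add: measure_def)
next
  case False
  have "emeasure (sym_pareto \<alpha>) {..<-b} = emeasure (sym_pareto \<alpha>) ({..<-b} - {-1..1})"
    by (rule emeasure_Diff_null_set[OF pareto_null_sets, symmetric]) auto
  also have "{..<-b} - {-1..1} = {..<-1}" using False assms by auto
  also have "emeasure (sym_pareto \<alpha>) {..<-1} = ennreal (1/2)" using pareto_tail_neg[OF alpha_pos, of 1] by simp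
  finally have "measure (sym_pareto \<alpha>) {..<-b} = enn2real (ennreal (1/2))" by (simp only: measure_def)
  also have "\<dots> = 1/2" by (rule enn2real_ennreal) simp
  finally show ?thesis using False by simp
qed

lemma powr_max: "0 \<le> s \<Longrightarrow> 0 \<le> t \<Longrightarrow> max s t powr \<alpha> = max (s powr \<alpha>) (t powr \<alpha>)"
  using powr_mono2[of \<alpha> s t] powr_mono2[of \<alpha> t s] alpha_pos
  by (cases "s \<le> t") (auto simp: max_def)

lemma powr_min: "0 \<le> s \<Longrightarrow> 0 \<le> t \<Longrightarrow> min s t powr \<alpha> = min (s powr \<alpha>) (t powr \<alpha>)"
  using powr_mono2[of \<alpha> s t] powr_mono2[of \<alpha> t s] alpha_pos
  by (cases "s \<le> t") (auto simp: min_def)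

lemma rr_eq: "rr x y = min (\<bar>x\<bar> powr \<alpha>) (\<bar>y\<bar> powr \<alpha>) / max (\<bar>x\<bar> powr \<alpha>) (\<bar>y\<bar> powr \<alpha>)"
  unfolding rr_def powr_divide by (simp add: powr_max powr_min)

lemma mx_pow: "mx x y powr \<alpha> = max (\<bar>x\<bar> powr \<alpha>) (\<bar>y\<bar> powr \<alpha>)"
  unfolding mx_def by (simp add: powr_max)

lemma pair_pos:
  assumes "mx x y \<noteq> 0"
  shows "kendall_pair \<alpha> x y B = rr x y * measure (sym_pareto \<alpha>) ((\<lambda>z. mx x y * z) -` B)
     + (1 - rr x y) * ((indicator B (mx x y) + indicator B (- mx x y)) / 2)"
  using assms unfolding pair_eq mx_def rr_def by simp

lemma mx_ge: "0 \<le> mx x y" unfolding mx_def by simp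

lemma key_ratio:
  assumes "mx x y \<noteq> 0"
  shows "rr x y * (mx x y powr \<alpha>)^2 = \<bar>x\<bar> powr \<alpha> * \<bar>y\<bar> powr \<alpha>"
    "rr x y * mx x y powr \<alpha> = min (\<bar>x\<bar> powr \<alpha>) (\<bar>y\<bar> powr \<alpha>)"
proof -
  have pos: "0 < max (\<bar>x\<bar> powr \<alpha>) (\<bar>y\<bar> powr \<alpha>)"
    using assms unfolding mx_def by (auto simp: max_def)
  show "rr x y * (mx x y powr \<alpha>)^2 = \<bar>x\<bar> powr \<alpha> * \<bar>y\<bar> powr \<alpha>"
    unfolding rr_eq mx_pow using pos
    by (cases "\<bar>x\<bar> powr \<alpha> \<le> \<bar>y\<bar> powr \<alpha>") (auto simp: max_def min_def power2_eq_square)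
  show "rr x y * mx x y powr \<alpha> = min (\<bar>x\<bar> powr \<alpha>) (\<bar>y\<bar> powr \<alpha>)"
    unfolding rr_eq mx_pow using pos by simp
qed

lemma aM_pow:
  assumes "0 < M"
  shows "(a / M) powr (-2*\<alpha>) = (M powr \<alpha> / a powr \<alpha>)^2"
    "(a / M) powr (-\<alpha>) = M powr \<alpha> / a powr \<alpha>"
proof -
  show "(a / M) powr (-\<alpha>) = M powr \<alpha> / a powr \<alpha>"
    by (simp add: powr_minus_divide powr_divide)
  have "(a / M) powr (-2*\<alpha>) = ((a / M) powr (-\<alpha>))^2"
    using powr2[of "a/M" "-\<alpha>"] by simp
  then show "(a / M) powr (-2*\<alpha>) = (M powr \<alpha> / a powr \<alpha>)^2"
    by (simp add: powr_minus_divide powr_divide)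
qed

lemma pre_up: "0 < M \<Longrightarrow> (\<lambda>z. M * z) -` {a<..} = {a/M<..}"
  by (auto simp: pos_divide_less_eq mult.commute)

lemma pre_down: "0 < M \<Longrightarrow> (\<lambda>z. M * z) -` {..<-a} = {..<-(a/M)}"
  by (auto simp: field_simps)

lemma pair_up:
  "kendall_pair \<alpha> x y {a<..} =
     (if mx x y \<le> a then \<bar>x\<bar> powr \<alpha> * \<bar>y\<bar> powr \<alpha> / (2 * (a powr \<alpha>)^2) else 1/2)"
proof (cases "mx x y = 0")
  case True
  then have "max \<bar>x\<bar> \<bar>y\<bar> = 0" by (simp add: mx_def)
  then have "x = 0" "y = 0" by (auto simp: max_def split: if_splits)
  then show ?thesis using a_pos True by (simp add: pair_eq)
next
  case False
  define M where "M = mx x y"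
  have M: "0 < M" using False mx_ge unfolding M_def by (simp add: order_less_le)
  have pre: "(\<lambda>z. mx x y * z) -` {a<..} = {a/M<..}" using pre_up[OF M] M_def by simp
  show ?thesis
  proof (cases "M \<le> a")
    case True
    have b: "1 \<le> a / M" using True M by simp
    have "kendall_pair \<alpha> x y {a<..} = rr x y * ((a/M) powr (-2*\<alpha>) / 2)"
      unfolding pair_pos[OF False] pre pi_up[OF divide_pos_pos[OF a_pos M]]
      using b True M by (simp add: M_def indicator_def)
    also have "\<dots> = rr x y * (M powr \<alpha>)^2 / (2 * (a powr \<alpha>)^2)"
      unfolding aM_pow[OF M] by (simp add: power_divide)
    also have "\<dots> = \<bar>x\<bar> powr \<alpha> * \<bar>y\<bar> powr \<alpha> / (2 * (a powr \<alpha>)^2)"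
      using key_ratio(1)[OF False] by (simp add: M_def)
    finally show ?thesis using True M_def by simp
  next
    case False2: False
    have b: "\<not> 1 \<le> a / M" using False2 M by simp
    have "kendall_pair \<alpha> x y {a<..} = rr x y * (1/2) + (1 - rr x y) * (1/2)"
      unfolding pair_pos[OF False] pre pi_up[OF divide_pos_pos[OF a_pos M]]
      using b False2 M a_pos by (simp add: M_def indicator_def)
    then show ?thesis using False2 M_def by (simp add: algebra_simps)
  qed
qed

lemma pair_down:
  "kendall_pair \<alpha> x y {..<-a} =
     (if mx x y \<le> a then \<bar>x\<bar> powr \<alpha> * \<bar>y\<bar> powr \<alpha> / (2 * (a powr \<alpha>)^2) else 1/2)"
proof (cases "mx x y = 0")
  case True
  then have "max \<bar>x\<bar> \<bar>y\<bar> = 0" by (simp add: mx_def)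
  then have "x = 0" "y = 0" by (auto simp: max_def split: if_splits)
  then show ?thesis using a_pos True by (simp add: pair_eq)
next
  case False
  define M where "M = mx x y"
  have M: "0 < M" using False mx_ge unfolding M_def by (simp add: order_less_le)
  have pre: "(\<lambda>z. mx x y * z) -` {..<-a} = {..<-(a/M)}" using pre_down[OF M] M_def by simp
  show ?thesis
  proof (cases "M \<le> a")
    case True
    have b: "1 \<le> a / M" using True M by simp
    have "kendall_pair \<alpha> x y {..<-a} = rr x y * ((a/M) powr (-2*\<alpha>) / 2)"
      unfolding pair_pos[OF False] pre pi_down[OF divide_pos_pos[OF a_pos M]]
      using b True M by (simp add: M_def indicator_def)
    also have "\<dots> = rr x y * (M powr \<alpha>)^2 / (2 * (a powr \<alpha>)^2)"
      unfolding aM_pow[OF M] by (simp add: power_divide)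
    also have "\<dots> = \<bar>x\<bar> powr \<alpha> * \<bar>y\<bar> powr \<alpha> / (2 * (a powr \<alpha>)^2)"
      using key_ratio(1)[OF False] by (simp add: M_def)
    finally show ?thesis using True M_def by simp
  next
    case False2: False
    have b: "\<not> 1 \<le> a / M" using False2 M by simp
    have "kendall_pair \<alpha> x y {..<-a} = rr x y * (1/2) + (1 - rr x y) * (1/2)"
      unfolding pair_pos[OF False] pre pi_down[OF divide_pos_pos[OF a_pos M]]
      using b False2 M a_pos by (simp add: M_def indicator_def)
    then show ?thesis using False2 M_def by (simp add: algebra_simps)
  qed
qed

definition gfun :: "real \<Rightarrow> real" where
  "gfun v = indicator {-a..a} v * \<bar>v\<bar> powr \<alpha>"

lemma gfun_meas[measurable]: "gfun \<in> borel_measurable borel"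
  unfolding gfun_def by measurable

lemma gfun_nonneg: "0 \<le> gfun v" unfolding gfun_def by (simp add: indicator_def)

lemma gfun_scale:
  assumes "0 < M"
  shows "gfun (M * z) = M powr \<alpha> * (indicator {-(a/M)..a/M} z * \<bar>z\<bar> powr \<alpha>)"
proof -
  have "(-a \<le> M * z \<and> M * z \<le> a) \<longleftrightarrow> (-(a/M) \<le> z \<and> z \<le> a/M)"
    using assms by (auto simp: field_simps)
  then show ?thesis
    unfolding gfun_def using assms by (auto simp: indicator_def abs_mult powr_mult)
qed

lemma JJ_g:
  "JJ \<alpha> (mx x y) (rr x y) (\<lambda>v. ennreal (gfun v)) =
    ennreal (if mx x y \<le> a then \<bar>x\<bar> powr \<alpha> + \<bar>y\<bar> powr \<alpha> - 2 * (\<bar>x\<bar> powr \<alpha> * \<bar>y\<bar> powr \<alpha>) / a powr \<alpha> else 0)"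
proof (cases "mx x y = 0")
  case True
  then have "max \<bar>x\<bar> \<bar>y\<bar> = 0" by (simp add: mx_def)
  then have "x = 0" "y = 0" by (auto simp: max_def split: if_splits)
  then show ?thesis using a_pos True by (simp add: JJ_def gfun_def)
next
  case False
  define M where "M = mx x y"
  define r where "r = rr x y"
  have M: "0 < M" using False mx_ge unfolding M_def by (simp add: order_less_le)
  have r: "0 \<le> r" "r \<le> 1" using rho_bounds unfolding r_def rr_def by auto
  have I: "(\<integral>\<^sup>+z. ennreal (gfun (M*z)) \<partial>sym_pareto \<alpha>) =
      ennreal (M powr \<alpha>) * (\<integral>\<^sup>+z. ennreal (indicator {-(a/M)..a/M} z * \<bar>z\<bar> powr \<alpha>) \<partial>sym_pareto \<alpha>)"
    unfolding gfun_scale[OF M]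
    by (subst nn_integral_cmult[symmetric]) (auto simp: ennreal_mult)
  show ?thesis
  proof (cases "M \<le> a")
    case True
    have b: "1 \<le> a / M" using True M by simp
    have Ma: "M powr \<alpha> \<le> a powr \<alpha>" using True M alpha_pos by (intro powr_mono2) auto
    have ap: "0 < a powr \<alpha>" using a_pos by simp
    have c1: "0 \<le> 1 - M powr \<alpha> / a powr \<alpha>" using Ma ap by simp
    have gM: "gfun M = M powr \<alpha>" "gfun (-M) = M powr \<alpha>" using True M by (auto simp: gfun_def)
    have "JJ \<alpha> M r (\<lambda>v. ennreal (gfun v)) =
        ennreal r * ennreal (M powr \<alpha> * (2 * (1 - M powr \<alpha> / a powr \<alpha>))) + ennreal ((1 - r) / 2) * ennreal (2 * M powr \<alpha>)"
      unfolding JJ_def I pareto_moment[OF alpha_pos b] aM_pow(2)[OF M]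
      using M gM c1 by (simp add: ennreal_mult ennreal_plus[symmetric] del: ennreal_plus)
    also have "\<dots> = ennreal (r * (M powr \<alpha> * (2 * (1 - M powr \<alpha> / a powr \<alpha>))) + (1 - r) / 2 * (2 * M powr \<alpha>))"
      using r c1 by (intro ennreal_lin2) auto
    also have "r * (M powr \<alpha> * (2 * (1 - M powr \<alpha> / a powr \<alpha>))) + (1 - r) / 2 * (2 * M powr \<alpha>)
        = 2 * (r * M powr \<alpha>) * (1 - M powr \<alpha> / a powr \<alpha>) + M powr \<alpha> - r * M powr \<alpha>"
      by (simp add: algebra_simps diff_divide_distrib)
    also have "\<dots> = \<bar>x\<bar> powr \<alpha> + \<bar>y\<bar> powr \<alpha> - 2 * (\<bar>x\<bar> powr \<alpha> * \<bar>y\<bar> powr \<alpha>) / a powr \<alpha>"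
    proof -
      have k: "r * M powr \<alpha> = min (\<bar>x\<bar> powr \<alpha>) (\<bar>y\<bar> powr \<alpha>)"
        using key_ratio(2)[OF False] by (simp add: r_def M_def)
      have m: "M powr \<alpha> = max (\<bar>x\<bar> powr \<alpha>) (\<bar>y\<bar> powr \<alpha>)" using mx_pow by (simp add: M_def)
      show ?thesis unfolding k unfolding m using ap
        by (cases "\<bar>x\<bar> powr \<alpha> \<le> \<bar>y\<bar> powr \<alpha>") (auto simp: max_def min_def field_simps)
    qed
    finally show ?thesis using True by (simp add: M_def r_def)
  next
    case False2: False
    have b: "a / M < 1" using False2 M by simp
    have gM: "gfun M = 0" "gfun (-M) = 0" using False2 M by (auto simp: gfun_def)
    show ?thesis
      using False False2 gM unfolding JJ_def M_def[symmetric] r_def[symmetric] I pareto_moment_small[OF b]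
      by simp
  qed
qed

end


context kwa
begin

definition nI :: real where "nI = measure \<nu> {-a..a}"
definition Hi :: real where "Hi = (LINT y|\<nu>. gfun y)"
definition AA :: real where "AA = a powr \<alpha>"
definition GG :: real where "GG = nI - Hi / AA"
definition HH :: real where "HH = Hi / AA"
definition vv :: "real \<Rightarrow> real" where "vv x = \<bar>x\<bar> powr \<alpha> / AA"

lemma AA_pos: "0 < AA" unfolding AA_def using a_pos by simp

lemma nI_eq: "nI = GG + HH" unfolding GG_def HH_def by simp
lemma Hi_eq: "Hi = AA * HH" unfolding HH_def using AA_pos by simp
lemma px_eq: "\<bar>x\<bar> powr \<alpha> = AA * vv x" unfolding vv_def using AA_pos by simp

lemma gfun_le: "gfun v \<le> AA"
  unfolding gfun_def AA_def using alpha_pos a_pos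
  by (auto simp: indicator_def intro!: powr_mono2)

lemma integrable_gfun: "prob_space M \<Longrightarrow> sets M = sets borel \<Longrightarrow> integrable M gfun"
proof -
  assume P: "prob_space M" and S: "sets M = sets borel"
  interpret P: prob_space M by (rule P)
  have "gfun \<in> borel_measurable M" by (subst measurable_cong_sets[OF S refl]) simp
  then show ?thesis
    using gfun_le gfun_nonneg by (intro P.integrable_const_bound[where B=AA]) auto
qed

lemma integrable_ind: "prob_space M \<Longrightarrow> sets M = sets borel \<Longrightarrow> B \<in> sets borel \<Longrightarrow> integrable M (indicator B :: real \<Rightarrow> real)"
proof -
  assume P: "prob_space M" and S: "sets M = sets borel" and B: "B \<in> sets borel"
  interpret P: prob_space M by (rule P)
  show ?thesis using B S P.emeasure_finite[of B] by (intro integrable_real_indicator) (auto simp: less_top[symmetric])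
qed

lemma lin_int_nu:
  "(LINT y|\<nu>. c1 + c2 * indicator {-a..a} y + c3 * gfun y) = c1 + c2 * nI + c3 * Hi"
proof -
  interpret N: prob_space \<nu> by (rule nu_prob)
  have i1: "integrable \<nu> (indicator {-a..a} :: real \<Rightarrow> real)" by (rule integrable_ind[OF nu_prob nu_sets]) auto
  have i2: "integrable \<nu> gfun" by (rule integrable_gfun[OF nu_prob nu_sets])
  have "(LINT y|\<nu>. c1 + c2 * indicator {-a..a} y + c3 * gfun y) =
      (LINT y|\<nu>. c1 + c2 * indicator {-a..a} y) + (LINT y|\<nu>. c3 * gfun y)"
    using i1 i2 by (intro Bochner_Integration.integral_add) auto
  also have "(LINT y|\<nu>. c1 + c2 * indicator {-a..a} y) = (LINT y|\<nu>. c1) + (LINT y|\<nu>. c2 * indicator {-a..a} y)"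
    using i1 by (intro Bochner_Integration.integral_add) auto
  finally show ?thesis using N.prob_space
    by (simp add: nI_def Hi_def)
qed

lemma lin_int_K:
  "(LINT y|kendall_kernel \<alpha> \<nu> x. c1 * indicator {..<-a} y + c2 * indicator {-a..a} y + c3 * gfun y) =
     c1 * measure (kendall_kernel \<alpha> \<nu> x) {..<-a} + c2 * measure (kendall_kernel \<alpha> \<nu> x) {-a..a}
     + c3 * (LINT y|kendall_kernel \<alpha> \<nu> x. gfun y)"
proof -
  let ?K = "kendall_kernel \<alpha> \<nu> x"
  interpret K: prob_space ?K by (rule prob_kernel)
  have i0: "integrable ?K (indicator {..<-a} :: real \<Rightarrow> real)" by (rule integrable_ind[OF prob_kernel]) auto
  have i1: "integrable ?K (indicator {-a..a} :: real \<Rightarrow> real)" by (rule integrable_ind[OF prob_kernel]) auto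
  have i2: "integrable ?K gfun" by (rule integrable_gfun[OF prob_kernel]) auto
  have "(LINT y|?K. c1 * indicator {..<-a} y + c2 * indicator {-a..a} y + c3 * gfun y) =
      (LINT y|?K. c1 * indicator {..<-a} y + c2 * indicator {-a..a} y) + (LINT y|?K. c3 * gfun y)"
    using i0 i1 i2 by (intro Bochner_Integration.integral_add) auto
  also have "(LINT y|?K. c1 * indicator {..<-a} y + c2 * indicator {-a..a} y) =
      (LINT y|?K. c1 * indicator {..<-a} y) + (LINT y|?K. c2 * indicator {-a..a} y)"
    using i0 i1 by (intro Bochner_Integration.integral_add) auto
  finally show ?thesis by (simp add: K.emeasure_eq_measure)
qed

lemma mx_le_iff: "\<bar>x\<bar> \<le> a \<Longrightarrow> mx x y \<le> a \<longleftrightarrow> \<bar>y\<bar> \<le> a"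
  unfolding mx_def by auto

lemma mx_gt: "a < \<bar>x\<bar> \<Longrightarrow> \<not> mx x y \<le> a"
  unfolding mx_def by auto

lemma pair_up_lin:
  assumes "\<bar>x\<bar> \<le> a"
  shows "kendall_pair \<alpha> x y {a<..} = 1/2 + (-1/2) * indicator {-a..a} y + (\<bar>x\<bar> powr \<alpha> / (2 * AA^2)) * gfun y"
  unfolding pair_up mx_le_iff[OF assms] by (auto simp: gfun_def indicator_def AA_def)

lemma pair_down_lin:
  assumes "\<bar>x\<bar> \<le> a"
  shows "kendall_pair \<alpha> x y {..<-a} = 1/2 + (-1/2) * indicator {-a..a} y + (\<bar>x\<bar> powr \<alpha> / (2 * AA^2)) * gfun y"
  unfolding pair_down mx_le_iff[OF assms] by (auto simp: gfun_def indicator_def AA_def)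

lemma Kup_in:
  assumes "\<bar>x\<bar> \<le> a"
  shows "measure (kendall_kernel \<alpha> \<nu> x) {a<..} = (1 - GG - HH + vv x * HH) / 2"
proof -
  have "measure (kendall_kernel \<alpha> \<nu> x) {a<..} = 1/2 + (-1/2) * nI + (\<bar>x\<bar> powr \<alpha> / (2 * AA^2)) * Hi"
    unfolding measure_kernel[of "{a<..}", simplified] pair_up_lin[OF assms] lin_int_nu ..
  also have "\<dots> = (1 - GG - HH + vv x * HH) / 2"
    unfolding nI_eq Hi_eq px_eq using AA_pos by (simp add: field_simps power2_eq_square)
  finally show ?thesis .
qed

lemma Kdown_in:
  assumes "\<bar>x\<bar> \<le> a"
  shows "measure (kendall_kernel \<alpha> \<nu> x) {..<-a} = (1 - GG - HH + vv x * HH) / 2"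
proof -
  have "measure (kendall_kernel \<alpha> \<nu> x) {..<-a} = 1/2 + (-1/2) * nI + (\<bar>x\<bar> powr \<alpha> / (2 * AA^2)) * Hi"
    unfolding measure_kernel[of "{..<-a}", simplified] pair_down_lin[OF assms] lin_int_nu ..
  also have "\<dots> = (1 - GG - HH + vv x * HH) / 2"
    unfolding nI_eq Hi_eq px_eq using AA_pos by (simp add: field_simps power2_eq_square)
  finally show ?thesis .
qed

lemma Kup_out:
  assumes "a < \<bar>x\<bar>"
  shows "measure (kendall_kernel \<alpha> \<nu> x) {a<..} = 1/2"
proof -
  interpret N: prob_space \<nu> by (rule nu_prob)
  show ?thesis
    unfolding measure_kernel[of "{a<..}", simplified] pair_up using mx_gt[OF assms] N.prob_space
    by simp
qed

lemma Kdown_out: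
  assumes "a < \<bar>x\<bar>"
  shows "measure (kendall_kernel \<alpha> \<nu> x) {..<-a} = 1/2"
proof -
  interpret N: prob_space \<nu> by (rule nu_prob)
  show ?thesis
    unfolding measure_kernel[of "{..<-a}", simplified] pair_down using mx_gt[OF assms] N.prob_space
    by simp
qed

lemma KIa:
  "measure (kendall_kernel \<alpha> \<nu> x) {-a..a} = 1 - measure (kendall_kernel \<alpha> \<nu> x) {..<-a} - measure (kendall_kernel \<alpha> \<nu> x) {a<..}"
proof -
  let ?K = "kendall_kernel \<alpha> \<nu> x"
  interpret K: prob_space ?K by (rule prob_kernel)
  have e: "{-a..a} = space ?K - ({..<-a} \<union> {a<..})" by auto
  have "measure ?K {-a..a} = measure ?K (space ?K) - measure ?K ({..<-a} \<union> {a<..})"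
    unfolding e by (rule K.finite_measure_compl) auto
  also have "measure ?K ({..<-a} \<union> {a<..}) = measure ?K {..<-a} + measure ?K {a<..}"
    using a_pos by (intro K.finite_measure_Union) auto
  finally show ?thesis using K.prob_space by simp
qed

definition jr :: "real \<Rightarrow> real \<Rightarrow> real" where
  "jr x y = (if mx x y \<le> a then \<bar>x\<bar> powr \<alpha> + \<bar>y\<bar> powr \<alpha> - 2 * (\<bar>x\<bar> powr \<alpha> * \<bar>y\<bar> powr \<alpha>) / a powr \<alpha> else 0)"

lemma jr_bounds: "0 \<le> jr x y" "jr x y \<le> 2 * AA"
proof -
  have "0 \<le> jr x y \<and> jr x y \<le> 2 * AA"
  proof (cases "mx x y \<le> a")
    case True
    then have b: "\<bar>x\<bar> \<le> a" "\<bar>y\<bar> \<le> a" unfolding mx_def by auto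
    define p where "p = \<bar>x\<bar> powr \<alpha>"
    define q where "q = \<bar>y\<bar> powr \<alpha>"
    have p: "0 \<le> p" "p \<le> AA" unfolding p_def AA_def using b alpha_pos by (auto intro!: powr_mono2)
    have q: "0 \<le> q" "q \<le> AA" unfolding q_def AA_def using b alpha_pos by (auto intro!: powr_mono2)
    have "p * q / AA \<le> p" using p q AA_pos by (simp add: divide_le_eq mult_left_mono)
    moreover have "p * q / AA \<le> q" using p q AA_pos mult_right_mono[of p AA q] by (simp add: divide_le_eq mult.commute)
    moreover have "0 \<le> p * q / AA" using p q AA_pos by simp
    moreover have "2 * (p * q) / AA = 2 * (p * q / AA)" by simp
    moreover have "jr x y = p + q - 2 * (p * q) / AA"
      using True unfolding jr_def p_def q_def AA_def by simp
    ultimately show ?thesis using p q by linarith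
  qed (simp add: jr_def AA_pos less_imp_le)
  then show "0 \<le> jr x y" "jr x y \<le> 2 * AA" by auto
qed

lemma jr_meas: "jr x \<in> borel_measurable borel"
  unfolding jr_def by measurable

lemma Kg:
  "(LINT v|kendall_kernel \<alpha> \<nu> x. gfun v) = (LINT y|\<nu>. jr x y)"
proof -
  interpret N: prob_space \<nu> by (rule nu_prob)
  have ij: "integrable \<nu> (jr x)"
    using jr_bounds jr_meas[of x] by (intro N.integrable_const_bound[where B="2*AA"]) auto
  have "(LINT v|kendall_kernel \<alpha> \<nu> x. gfun v) = enn2real (\<integral>\<^sup>+v. ennreal (gfun v) \<partial>kendall_kernel \<alpha> \<nu> x)"
    by (rule integral_eq_nn_integral) (auto simp: gfun_nonneg)
  also have "(\<integral>\<^sup>+v. ennreal (gfun v) \<partial>kendall_kernel \<alpha> \<nu> x) = (\<integral>\<^sup>+y. JJ \<alpha> (mx x y) (rr x y) (\<lambda>v. ennreal (gfun v)) \<partial>\<nu>)"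
    by (rule kernel_nn) simp
  also have "\<dots> = (\<integral>\<^sup>+y. ennreal (jr x y) \<partial>\<nu>)"
    by (simp add: JJ_g jr_def)
  also have "\<dots> = ennreal (LINT y|\<nu>. jr x y)"
    by (rule nn_integral_eq_integral[OF ij]) (simp add: jr_bounds)
  finally show ?thesis using jr_bounds by (simp add: integral_nonneg)
qed

lemma Kg_in:
  assumes "\<bar>x\<bar> \<le> a"
  shows "(LINT v|kendall_kernel \<alpha> \<nu> x. gfun v) = AA * (HH + vv x * (GG - HH))"
proof -
  have "jr x y = \<bar>x\<bar> powr \<alpha> + 0 * indicator {-a..a} y + \<bar>x\<bar> powr \<alpha> * indicator {-a..a} y - \<bar>x\<bar> powr \<alpha> + (1 - 2 * \<bar>x\<bar> powr \<alpha> / AA) * gfun y" for y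
    unfolding jr_def mx_le_iff[OF assms] by (auto simp: gfun_def indicator_def AA_def field_simps)
  then have "(LINT y|\<nu>. jr x y) = (LINT y|\<nu>. 0 + (\<bar>x\<bar> powr \<alpha>) * indicator {-a..a} y + (1 - 2 * \<bar>x\<bar> powr \<alpha> / AA) * gfun y)"
    by simp
  also have "\<dots> = 0 + \<bar>x\<bar> powr \<alpha> * nI + (1 - 2 * \<bar>x\<bar> powr \<alpha> / AA) * Hi"
    by (rule lin_int_nu)
  also have "\<dots> = AA * (HH + vv x * (GG - HH))"
    unfolding nI_eq Hi_eq px_eq using AA_pos by (simp add: field_simps)
  finally show ?thesis using Kg by simp
qed

lemma Kg_out:
  assumes "a < \<bar>x\<bar>"
  shows "(LINT v|kendall_kernel \<alpha> \<nu> x. gfun v) = 0"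
  unfolding Kg jr_def using mx_gt[OF assms] by simp

end


fun ab :: "real \<Rightarrow> real \<Rightarrow> nat \<Rightarrow> real \<times> real" where
  "ab G H 0 = ((1-G-H)/2, H/2)"
| "ab G H (Suc k) = ((G+H) * fst (ab G H k) + H * snd (ab G H k) + (1/2)^(k+2) * (1-G-H),
     -H * fst (ab G H k) + (G-H) * snd (ab G H k) + (1/2)^(k+2) * H)"

definition cA :: "real \<Rightarrow> real \<Rightarrow> real" where "cA G H = 1 + H / (2*G-1)^2 - G / (2*G-1)"
definition cb :: "real \<Rightarrow> real \<Rightarrow> real" where "cb G H = H * (1-G) / (2*G-1)"
definition cc :: "real \<Rightarrow> real \<Rightarrow> real" where
  "cc G H = H * (1-G) / (2*G-1) + G * (1-G) / (2*G-1) - H * G / (2*G-1)^2"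
definition cc2 :: "real \<Rightarrow> real \<Rightarrow> real" where
  "cc2 G H = - H * (1-G) / (2*G-1) + H * G / (2*G-1)^2"

lemma ab_closed:
  assumes d: "2*G - 1 \<noteq> 0"
  shows "ab G H k = (cA G H / 2 * (1/2)^k + (cb G H * real k + cc G H) * G^k,
                     - H / (2*(2*G-1)^2) * (1/2)^k + (- cb G H * real k + cc2 G H) * G^k)"
proof (induction k)
  define e where "e = 2*G - 1"
  have e0: "e \<noteq> 0" using d e_def by simp
  have Ge: "G = (e+1)/2" using e_def by simp
  case 0
  show ?case unfolding cA_def cc_def cc2_def e_def[symmetric] ab.simps using e0
    by (simp add: Ge field_simps power2_eq_square)
next
  case (Suc k)
  define u where "u = (1/2::real)^k"
  define w where "w = G^k"
  define K where "K = real k"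
  define P where "P = cA G H / 2"
  define P2 where "P2 = - H / (2*(2*G-1)^2)"
  define b where "b = cb G H"
  define c where "c = cc G H"
  define c2 where "c2 = cc2 G H"
  have e1: "(1/2::real)^(k+2) = u/4" unfolding u_def by (simp add: power_add)
  have e2: "(1/2::real)^(Suc k) = u/2" unfolding u_def by simp
  have e3: "G^(Suc k) = G * w" unfolding w_def by simp
  have e4: "real (Suc k) = K + 1" unfolding K_def by simp
  define e where "e = 2*G - 1"
  have e0: "e \<noteq> 0" using d e_def by simp
  have Ge: "G = (e+1)/2" using e_def by simp
  have I1: "(G+H)*P + H*P2 + (1-G-H)/4 = P/2"
    unfolding P_def P2_def cA_def e_def[symmetric] using e0
    by (simp add: Ge field_simps power2_eq_square)
  have I2: "(G+H)*c + H*c2 = G*(b+c)"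
    unfolding c_def c2_def b_def cc_def cc2_def cb_def e_def[symmetric] using e0
    by (simp add: Ge field_simps power2_eq_square)
  have I3: "-H*P + (G-H)*P2 + H/4 = P2/2"
    unfolding P_def P2_def cA_def e_def[symmetric] using e0
    by (simp add: Ge field_simps power2_eq_square)
  have I4: "-H*c + (G-H)*c2 = G*(-b+c2)"
    unfolding c_def c2_def b_def cc_def cc2_def cb_def e_def[symmetric] using e0
    by (simp add: Ge field_simps power2_eq_square)
  have IH: "ab G H k = (P * u + (b * K + c) * w, P2 * u + (- b * K + c2) * w)"
    using Suc unfolding P_def P2_def b_def c_def c2_def u_def w_def K_def by simp
  have A1: "(G+H)*(P * u + (b * K + c) * w) + H*(P2 * u + (- b * K + c2) * w) + u/4*(1-G-H)
      = ((G+H)*P + H*P2 + (1-G-H)/4)*u + ((G+H)*c + H*c2)*w + (G*b)*K*w"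
    by (simp add: algebra_simps)
  have A2: "-H*(P * u + (b * K + c) * w) + (G-H)*(P2 * u + (- b * K + c2) * w) + u/4*H
      = (-H*P + (G-H)*P2 + H/4)*u + (-H*c + (G-H)*c2)*w - (G*b)*K*w"
    by (simp add: algebra_simps)
  show ?case
    unfolding ab.simps IH e1 e2 e3 e4 fst_conv snd_conv P_def[symmetric] P2_def[symmetric]
      b_def[symmetric] c_def[symmetric] c2_def[symmetric] u_def[symmetric] w_def[symmetric] K_def[symmetric]
    unfolding A1 A2 I1 I2 I3 I4 by (simp add: algebra_simps)
qed


context kwa
begin

lemma passage:
  "kendall_passage \<alpha> \<nu> a k x =
    (if a < \<bar>x\<bar> then (1/2)^(k+1) else fst (ab GG HH k) + snd (ab GG HH k) * vv x)"
proof (induction k arbitrary: x)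
  case 0
  show ?case
  proof (cases "a < \<bar>x\<bar>")
    case True
    then show ?thesis by (simp add: Kup_out)
  next
    case False
    then show ?thesis by (simp add: Kup_in field_simps)
  qed
next
  case (Suc k)
  define t where "t = (1/2::real)^(k+1)"
  define p where "p = fst (ab GG HH k)"
  define q where "q = snd (ab GG HH k)"
  have pw: "indicator {..a} y * kendall_passage \<alpha> \<nu> a k y =
      t * indicator {..<-a} y + p * indicator {-a..a} y + (q / AA) * gfun y" for y
  proof -
    have "\<bar>y\<bar> powr \<alpha> / AA = \<bar>y\<bar> powr \<alpha> * (1 / AA)" by simp
    then show ?thesis
      unfolding Suc t_def[symmetric] p_def[symmetric] q_def[symmetric] using a_pos AA_pos
      by (auto simp: indicator_def gfun_def vv_def)
  qed
  have "kendall_passage \<alpha> \<nu> a (Suc k) x =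
      t * measure (kendall_kernel \<alpha> \<nu> x) {..<-a} + p * measure (kendall_kernel \<alpha> \<nu> x) {-a..a}
      + (q / AA) * (LINT y|kendall_kernel \<alpha> \<nu> x. gfun y)"
    by (simp only: kendall_passage.simps pw lin_int_K)
  also have "\<dots> = (if a < \<bar>x\<bar> then (1/2)^(Suc k+1) else fst (ab GG HH (Suc k)) + snd (ab GG HH (Suc k)) * vv x)"
  proof (cases "a < \<bar>x\<bar>")
    case True
    then show ?thesis unfolding KIa using True by (simp add: Kup_out Kdown_out Kg_out t_def)
  next
    case False
    then have x: "\<bar>x\<bar> \<le> a" by simp
    have e1: "(1/2::real)^(k+2) = t/2" unfolding t_def by simp
    show ?thesis unfolding KIa Kup_in[OF x] Kdown_in[OF x] Kg_in[OF x] ab.simps(2) fst_conv snd_conv e1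
        p_def[symmetric] q_def[symmetric] using False AA_pos
      by (simp add: field_simps)
  qed
  finally show ?case .
qed

end


context kwa
begin

lemma Psi_lin: "Psi \<alpha> (y / a) = 0 + 1 * indicator {-a..a} y + (-1/AA) * gfun y"
proof (cases "\<bar>y\<bar> \<le> a")
  case True
  have "\<bar>y\<bar> powr \<alpha> \<le> AA" unfolding AA_def using True alpha_pos by (intro powr_mono2) auto
  then have "0 \<le> 1 - \<bar>y\<bar> powr \<alpha> / AA" using AA_pos by simp
  moreover have "-a \<le> y" "y \<le> a" using True by auto
  ultimately show ?thesis using True a_pos
    by (simp add: Psi_def abs_divide powr_divide gfun_def indicator_def AA_def)
next
  case False
  have "AA < \<bar>y\<bar> powr \<alpha>" unfolding AA_def using False alpha_pos a_pos by (intro powr_less_mono2) auto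
  then have "1 - \<bar>y\<bar> powr \<alpha> / AA < 0" using AA_pos by simp
  moreover have "\<not> (-a \<le> y \<and> y \<le> a)" using False by auto
  ultimately show ?thesis using False a_pos
    by (simp add: Psi_def abs_divide powr_divide gfun_def indicator_def AA_def)
qed

lemma kG_eq: "kG \<alpha> \<nu> a = GG"
  unfolding kG_def Psi_lin lin_int_nu GG_def by simp

lemma kH_eq: "kH \<alpha> \<nu> a = HH"
  unfolding kH_def HH_def Hi_def gfun_def AA_def by (simp add: powr_minus_divide)

lemma GG_lt1:
  assumes "measure \<nu> {0} = 0"
  shows "GG \<noteq> 1"
proof
  assume G1: "GG = 1"
  interpret N: prob_space \<nu> by (rule nu_prob)
  have Pm: "(\<lambda>y. Psi \<alpha> (y / a)) \<in> borel_measurable borel" unfolding Psi_def by measurable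
  have Pb: "0 \<le> Psi \<alpha> t" "Psi \<alpha> t \<le> 1" for t
    unfolding Psi_def by auto
  have iP: "integrable \<nu> (\<lambda>y. Psi \<alpha> (y / a))"
    using Pm Pb by (intro N.integrable_const_bound[where B=1]) auto
  have i1: "integrable \<nu> (\<lambda>y. 1 - Psi \<alpha> (y / a))"
    using iP by auto
  have "(LINT y|\<nu>. 1 - Psi \<alpha> (y / a)) = 1 - kG \<alpha> \<nu> a"
    using iP N.prob_space unfolding kG_def by (simp add: Bochner_Integration.integral_diff)
  then have "(LINT y|\<nu>. 1 - Psi \<alpha> (y / a)) = 0" using G1 kG_eq by simp
  then have "AE y in \<nu>. 1 - Psi \<alpha> (y / a) = 0"
    using integral_nonneg_eq_0_iff_AE[OF i1] Pb by simp
  then have "AE y in \<nu>. y = 0"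
  proof (rule AE_mp, intro AE_I2 impI)
    fix y assume "1 - Psi \<alpha> (y / a) = 0"
    then have "max 0 (1 - \<bar>y / a\<bar> powr \<alpha>) = 1" by (simp add: Psi_def)
    then have "\<bar>y / a\<bar> powr \<alpha> = 0" by (auto simp: max_def split: if_splits)
    then show "y = 0" using a_pos by simp
  qed
  moreover have "{0::real} \<in> sets \<nu>" unfolding nu_sets by measurable
  ultimately have "measure \<nu> {y \<in> space \<nu>. y = 0} = 1"
    by (subst N.prob_Collect_eq_1) auto
  then show False using assms by simp
qed

end

lemma final_algebra:
  fixes G H :: real and m :: nat
  assumes d: "2*G - 1 \<noteq> 0" and g1: "G \<noteq> 1"
  shows "cA G H / 2 * (1/2)^m + (cb G H * real m + cc G H) * G^m =
     (let A = 1 + H / (2*G - 1)^2 - G / (2*G - 1);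
          B = H / ((2*G - 1) * (1 - G));
          C = G / (2*G - 1) - H / (2*G - 1)^2 * (G / (1 - G))
      in A * (1/2)^(Suc m) + B * real (Suc m) * (1 - G)^2 * G^(Suc m - 1) + C * G^(Suc m - 1) * (1 - G))"
proof -
  define e where "e = 2*G - 1"
  have e0: "e \<noteq> 0" using d e_def by simp
  have Ge: "G = (e+1)/2" using e_def by simp
  have g0: "1 - G \<noteq> 0" using g1 by simp
  have b1: "H / (e * (1 - G)) * (1 - G)^2 = H * (1 - G) / e"
    using e0 g0 by (simp add: field_simps power2_eq_square)
  have c1: "(G / e - H / e^2 * (G / (1 - G))) * (1 - G) = G * (1 - G) / e - H * G / e^2"
    using e0 g0 by (simp add: field_simps power2_eq_square)
  define X where "X = H * (1 - G) / e"
  define Y where "Y = G * (1 - G) / e"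
  define Z where "Z = H * G / e^2"
  have cbX: "cb G H = X" unfolding cb_def X_def e_def ..
  have ccX: "cc G H = X + Y - Z" unfolding cc_def X_def Y_def Z_def e_def ..
  have B2: "H / ((2*G - 1) * (1 - G)) * real (Suc m) * (1 - G)^2 = X * real (Suc m)"
  proof -
    have "H / ((2*G - 1) * (1 - G)) * real (Suc m) * (1 - G)^2 = (H / (e * (1 - G)) * (1 - G)^2) * real (Suc m)"
      unfolding e_def by (simp only: ac_simps)
    then show ?thesis unfolding b1 X_def .
  qed
  have C2: "(G / (2*G - 1) - H / (2*G - 1)^2 * (G / (1 - G))) * (1 - G) = Y - Z"
    using c1 unfolding Y_def Z_def e_def .
  have k: "cb G H * real m + cc G H = H / ((2*G - 1) * (1 - G)) * real (Suc m) * (1 - G)^2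
       + (G / (2*G - 1) - H / (2*G - 1)^2 * (G / (1 - G))) * (1 - G)"
    unfolding B2 C2 cbX ccX by (simp add: algebra_simps)
  define AAc where "AAc = 1 + H / (2*G - 1)^2 - G / (2*G - 1)"
  define BB where "BB = H / ((2*G - 1) * (1 - G))"
  define CC where "CC = G / (2*G - 1) - H / (2*G - 1)^2 * (G / (1 - G))"
  have kk: "cb G H * real m + cc G H = BB * real (Suc m) * (1 - G)^2 + CC * (1 - G)"
    unfolding BB_def CC_def by (rule k)
  have "AAc * (1/2)^(Suc m) + BB * real (Suc m) * (1 - G)^2 * G^(Suc m - 1) + CC * G^(Suc m - 1) * (1 - G)
      = AAc / 2 * (1/2)^m + (BB * real (Suc m) * (1 - G)^2 + CC * (1 - G)) * G^m"
    by (simp add: algebra_simps)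
  then show ?thesis
    unfolding Let_def AAc_def[symmetric] BB_def[symmetric] CC_def[symmetric] cA_def[symmetric] kk[symmetric]
    by (simp add: AAc_def cA_def)
qed


lemma ABC_sum:
  fixes G H :: real
  assumes d: "2*G - 1 \<noteq> 0" and g1: "G \<noteq> 1"
  shows "(1 + H / (2*G - 1)^2 - G / (2*G - 1)) + H / ((2*G - 1) * (1 - G))
     + (G / (2*G - 1) - H / (2*G - 1)^2 * (G / (1 - G))) = 1"
proof -
  define e where "e = 2*G - 1"
  have e0: "e \<noteq> 0" using d e_def by simp
  have g0: "1 - G \<noteq> 0" using g1 by simp
  define D where "D = e^2 * (1 - G)"
  have t1: "H / e^2 = H * (1 - G) / D" unfolding D_def using g0 by simp
  have t2: "H / (e * (1 - G)) = H * e / D" unfolding D_def using e0 by (simp add: power2_eq_square)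
  have t3: "H / e^2 * (G / (1 - G)) = H * G / D" unfolding D_def by simp
  have t4: "H * (1 - G) / D + H * e / D - H * G / D = (H * (1 - G) + H * e - H * G) / D"
    by (simp add: add_divide_distrib diff_divide_distrib)
  have t5: "H * (1 - G) + H * e - H * G = 0" unfolding e_def by (simp add: algebra_simps)
  have z: "H / e^2 + H / (e * (1 - G)) - H / e^2 * (G / (1 - G)) = 0"
    unfolding t3 unfolding t1 t2 unfolding t4 t5 by simp
  show ?thesis unfolding e_def[symmetric] using z by (simp add: algebra_simps)
qed

theorem mainTheorem12:
  fixes \<alpha> a :: real and \<nu> :: "real measure"
  assumes "\<alpha> > 0"
    and "sym_measure \<nu>"
    and "measure \<nu> {0} = 0"
    and "a > 0"
    and "measure \<nu> {a} = 0"
    and "kG \<alpha> \<nu> a \<noteq> 1/2"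
  shows "(\<forall>n::nat. n \<ge> 1 \<longrightarrow>
           first_passage_prob \<alpha> \<nu> a n =
             (let G = kG \<alpha> \<nu> a; H = kH \<alpha> \<nu> a;
                  A = 1 + H / (2*G - 1)^2 - G / (2*G - 1);
                  B = H / ((2*G - 1) * (1 - G));
                  C = G / (2*G - 1) - H / (2*G - 1)^2 * (G / (1 - G))
              in A * (1/2)^n + B * real n * (1 - G)^2 * G^(n-1) + C * G^(n-1) * (1 - G)))
       \<and> (let G = kG \<alpha> \<nu> a; H = kH \<alpha> \<nu> a;
              A = 1 + H / (2*G - 1)^2 - G / (2*G - 1);
              B = H / ((2*G - 1) * (1 - G));
              C = G / (2*G - 1) - H / (2*G - 1)^2 * (G / (1 - G))
          in A + B + C = 1)"
proof -
  have P: "prob_space \<nu>" and S: "sets \<nu> = sets borel" using assms(2) by (auto simp: sym_measure_def)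
  have K: "kwa \<alpha> \<nu> a"
    unfolding kwa_def kw_def kwa_axioms_def using assms(1,4) P S by blast
  interpret kwa \<alpha> \<nu> a by (rule K)
  have d: "2 * GG - 1 \<noteq> 0" using assms(6) kG_eq by auto
  have g1: "GG \<noteq> 1" using GG_lt1[OF assms(3)] .
  show ?thesis
  proof (intro conjI allI impI)
    fix n :: nat assume "n \<ge> 1"
    then obtain m where n: "n = Suc m" by (cases n) auto
    have "first_passage_prob \<alpha> \<nu> a n = fst (ab GG HH m)"
      unfolding first_passage_prob_def n using passage[of m 0] a_pos alpha_pos by (simp add: vv_def)
    also have "\<dots> = cA GG HH / 2 * (1/2)^m + (cb GG HH * real m + cc GG HH) * GG^m"
      using ab_closed[OF d, of HH m] by simp
    also have "\<dots> = (let A = 1 + HH / (2*GG - 1)^2 - GG / (2*GG - 1);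
          B = HH / ((2*GG - 1) * (1 - GG));
          C = GG / (2*GG - 1) - HH / (2*GG - 1)^2 * (GG / (1 - GG))
      in A * (1/2)^(Suc m) + B * real (Suc m) * (1 - GG)^2 * GG^(Suc m - 1) + C * GG^(Suc m - 1) * (1 - GG))"
      by (rule final_algebra[OF d g1])
    finally show "first_passage_prob \<alpha> \<nu> a n =
             (let G = kG \<alpha> \<nu> a; H = kH \<alpha> \<nu> a;
                  A = 1 + H / (2*G - 1)^2 - G / (2*G - 1);
                  B = H / ((2*G - 1) * (1 - G));
                  C = G / (2*G - 1) - H / (2*G - 1)^2 * (G / (1 - G))
              in A * (1/2)^n + B * real n * (1 - G)^2 * G^(n-1) + C * G^(n-1) * (1 - G))"
      unfolding kG_eq kH_eq n by (simp only: Let_def)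
  next
    show "let G = kG \<alpha> \<nu> a; H = kH \<alpha> \<nu> a;
              A = 1 + H / (2*G - 1)^2 - G / (2*G - 1);
              B = H / ((2*G - 1) * (1 - G));
              C = G / (2*G - 1) - H / (2*G - 1)^2 * (G / (1 - G))
          in A + B + C = 1"
      unfolding kG_eq kH_eq Let_def by (rule ABC_sum[OF d g1])
  qed
qed

end
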